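(* Let $d\ge2$ and $r,s\ge1$ be integers, and $a_1,\dots,a_d,a'_1,\dots,a'_d\in k$. Let $\widetilde X(d,r)\subset\mathbb{A}^3=\mathrm{Spec}\,k[x,y,z]$ be the hypersurface $x^rz+(y^d+a_1xy^{d-1}+\dots+a_{d-1}x^{d-1}y+a_dx^d)=1$ and $\widetilde X'(d,s)$ the hypersurface $x^sz+(y^d+a'_1xy^{d-1}+\dots+a'_{d-1}x^{d-1}y+a'_dx^d)=1$. Let $W(d,r,s)$ be the variety obtained by gluing $d$ copies $\{\omega\}\times\mathbb{A}^3$ ($\omega\in H(d)$) of $\mathbb{A}^3$ with coordinates $(x,c_1,c_2)$ via the identifications, for $x\neq0$, $(\omega,x,c_1,c_2)\sim\left(\lambda,x,\,c_1+\frac{p_\omega(x)-p_\lambda(x)}{x^r},\,c_2+\frac{p'_\omega(x)-p'_\lambda(x)}{x^s}\right)$. Then there are isomorphisms $\widetilde X(d,r)\times\mathbb{A}^1\cong W(d,r,s)\cong\widetilde X'(d,s)\times\mathbb{A}^1$.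
   Context: Work over an algebraically closed field $k$ of characteristic zero. $H(d)$ denotes the group of $d$-th roots of unity in $k$. For $\omega\in H(d)$, $p_\omega(x)\in k[x]$ is the unique polynomial of degree $\le r-1$ with $p_\omega(0)=\omega$ such that there is $q_\omega(x)\in k[x]$ with $x^rq_\omega(x)+p_\omega(x)^d+a_1xp_\omega(x)^{d-1}+\dots+a_{d-1}x^{d-1}p_\omega(x)+a_dx^d=1$; similarly $p'_\omega(x)$ is the unique polynomial of degree $\le s-1$ with $p'_\omega(0)=\omega$ such that $x^s$ divides $1-(p'_\omega(x)^d+a'_1xp'_\omega(x)^{d-1}+\dots+a'_dx^d)$. *)

theory Defs
  imports "HOL-Computational_Algebra.Polynomial"
begin

inductive_set polyfun :: "nat \<Rightarrow> ('a::comm_ring_1 list \<Rightarrow> 'a) set" for n where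
  proj: "i < n \<Longrightarrow> (\<lambda>v. v ! i) \<in> polyfun n"
| const: "(\<lambda>v. c) \<in> polyfun n"
| add: "f \<in> polyfun n \<Longrightarrow> g \<in> polyfun n \<Longrightarrow> (\<lambda>v. f v + g v) \<in> polyfun n"
| mult: "f \<in> polyfun n \<Longrightarrow> g \<in> polyfun n \<Longrightarrow> (\<lambda>v. f v * g v) \<in> polyfun n"

definition H :: "nat \<Rightarrow> 'a::field set" where
  "H d = {w. w ^ d = 1}"

definition Fsub :: "nat \<Rightarrow> (nat \<Rightarrow> 'a::field) \<Rightarrow> 'a poly \<Rightarrow> 'a poly" where
  "Fsub d a p = p ^ d + (\<Sum>i=1..d. smult (a i) (monom 1 i * p ^ (d - i)))"

definition pw :: "nat \<Rightarrow> (nat \<Rightarrow> 'a::field) \<Rightarrow> nat \<Rightarrow> 'a \<Rightarrow> 'a poly" where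
  "pw d a r w = (THE p. degree p \<le> r - 1 \<and> poly p 0 = w \<and> monom 1 r dvd (1 - Fsub d a p))"

definition Xt :: "nat \<Rightarrow> nat \<Rightarrow> (nat \<Rightarrow> 'a::field) \<Rightarrow> 'a list set" where
  "Xt d r a = {[x, y, z] | x y z.
      x ^ r * z + (y ^ d + (\<Sum>i=1..d. a i * x ^ i * y ^ (d - i))) = 1}"

text \<open>Product with the affine line: append one free coordinate.\<close>
definition cyl :: "'a list set \<Rightarrow> 'a list set" where
  "cyl S = {v @ [t] | v t. v \<in> S}"

definition glue_rel :: "nat \<Rightarrow> nat \<Rightarrow> nat \<Rightarrow> (nat \<Rightarrow> 'a::field) \<Rightarrow> (nat \<Rightarrow> 'a)
    \<Rightarrow> (('a \<times> 'a list) \<times> ('a \<times> 'a list)) set" where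
  "glue_rel d r s a a' = {((w, [x, c1, c2]), (l, [x', c1', c2'])) | w l x c1 c2 x' c1' c2'.
      w \<in> H d \<and> l \<in> H d \<and> x' = x \<and>
      ((w = l \<and> c1' = c1 \<and> c2' = c2) \<or>
       (x \<noteq> 0 \<and> c1' = c1 + (poly (pw d a r w) x - poly (pw d a r l) x) / x ^ r
               \<and> c2' = c2 + (poly (pw d a' s w) x - poly (pw d a' s l) x) / x ^ s))}"

definition Wpts :: "nat \<Rightarrow> nat \<Rightarrow> nat \<Rightarrow> (nat \<Rightarrow> 'a::field) \<Rightarrow> (nat \<Rightarrow> 'a)
    \<Rightarrow> ('a \<times> 'a list) set set" where
  "Wpts d r s a a' = (H d \<times> {v. length v = 3}) // glue_rel d r s a a'"

definition Wcls :: "nat \<Rightarrow> nat \<Rightarrow> nat \<Rightarrow> (nat \<Rightarrow> 'a::field) \<Rightarrow> (nat \<Rightarrow> 'a)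
    \<Rightarrow> 'a \<Rightarrow> 'a list \<Rightarrow> ('a \<times> 'a list) set" where
  "Wcls d r s a a' w v = glue_rel d r s a a' `` {(w, v)}"

text \<open>Morphism from a (quasi-)affine variety S in A^n to W: locally (on basic opens
  h \<noteq> 0 around each point) it lands in one chart with regular coordinates g_i/h.\<close>
definition mor_to_W :: "nat \<Rightarrow> 'a list set \<Rightarrow> nat \<Rightarrow> nat \<Rightarrow> nat \<Rightarrow> (nat \<Rightarrow> 'a::field)
    \<Rightarrow> (nat \<Rightarrow> 'a) \<Rightarrow> ('a list \<Rightarrow> ('a \<times> 'a list) set) \<Rightarrow> bool" where
  "mor_to_W n S d r s a a' \<phi> \<longleftrightarrow>
     (\<forall>p\<in>S. \<exists>w\<in>H d. \<exists>h g1 g2 g3.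
        h \<in> polyfun n \<and> g1 \<in> polyfun n \<and> g2 \<in> polyfun n \<and> g3 \<in> polyfun n \<and> h p \<noteq> 0 \<and>
        (\<forall>q\<in>S. h q \<noteq> 0 \<longrightarrow> \<phi> q = Wcls d r s a a' w [g1 q / h q, g2 q / h q, g3 q / h q]))"

definition mor_from_W :: "nat \<Rightarrow> 'a list set \<Rightarrow> nat \<Rightarrow> nat \<Rightarrow> nat \<Rightarrow> (nat \<Rightarrow> 'a::field)
    \<Rightarrow> (nat \<Rightarrow> 'a) \<Rightarrow> (('a \<times> 'a list) set \<Rightarrow> 'a list) \<Rightarrow> bool" where
  "mor_from_W m S d r s a a' \<psi> \<longleftrightarrow>
     \<psi> ` Wpts d r s a a' \<subseteq> S \<and>
     (\<forall>w\<in>H d. \<exists>gs. length gs = m \<and> (\<forall>g\<in>set gs. g \<in> polyfun 3) \<and>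
        (\<forall>v. length v = 3 \<longrightarrow> \<psi> (Wcls d r s a a' w v) = map (\<lambda>g. g v) gs))"

definition iso_W :: "nat \<Rightarrow> 'a list set \<Rightarrow> nat \<Rightarrow> nat \<Rightarrow> nat \<Rightarrow> (nat \<Rightarrow> 'a::field)
    \<Rightarrow> (nat \<Rightarrow> 'a) \<Rightarrow> bool" where
  "iso_W n S d r s a a' \<longleftrightarrow>
     (\<exists>\<phi> \<psi>. mor_to_W n S d r s a a' \<phi> \<and> mor_from_W n S d r s a a' \<psi> \<and>
        (\<forall>p\<in>S. \<psi> (\<phi> p) = p) \<and> (\<forall>x\<in>Wpts d r s a a'. \<phi> (\<psi> x) = x))"

end

theory Submission
  imports Defs
begin

section \<open>Closure of polynomial functions\<close>

lemma pf_diff: "f \<in> polyfun n \<Longrightarrow> g \<in> polyfun n \<Longrightarrow> (\<lambda>v. f v - g v) \<in> polyfun n"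
proof -
  assume f: "f \<in> polyfun n" and g: "g \<in> polyfun n"
  have "(\<lambda>v. f v + (\<lambda>v. -1) v * g v) \<in> polyfun n"
    by (intro polyfun.add polyfun.mult f g polyfun.const)
  thus ?thesis by simp
qed

lemma pf_uminus: "f \<in> polyfun n \<Longrightarrow> (\<lambda>v. - f v) \<in> polyfun n"
  using pf_diff[OF polyfun.const[of 0]] by simp

lemma pf_power: "f \<in> polyfun n \<Longrightarrow> (\<lambda>v. f v ^ k) \<in> polyfun n"
proof (induction k)
  case 0 then show ?case using polyfun.const[of 1] by simp
next
  case (Suc k) then show ?case using polyfun.mult[OF Suc.prems Suc.IH] by simp
qed

lemma pf_sum: "(\<And>i. i \<in> I \<Longrightarrow> f i \<in> polyfun n) \<Longrightarrow> (\<lambda>v. \<Sum>i\<in>I. f i v) \<in> polyfun n"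
proof (cases "finite I")
  case True
  assume a: "\<And>i. i \<in> I \<Longrightarrow> f i \<in> polyfun n"
  from True a show ?thesis
  proof (induction I rule: finite_induct)
    case empty then show ?case using polyfun.const[of 0] by simp
  next
    case (insert x F)
    then show ?case using polyfun.add[of "f x" n "\<lambda>v. \<Sum>i\<in>F. f i v"] by simp
  qed
next
  case False then show ?thesis using polyfun.const[of 0] by simp
qed

lemma pf_sum': "(\<And>i. i \<in> I \<Longrightarrow> (\<lambda>v. f i v) \<in> polyfun n) \<Longrightarrow> (\<lambda>v. \<Sum>i\<in>I. f i v) \<in> polyfun n"
  using pf_sum[of I f n] by simp

lemma pf_poly: "f \<in> polyfun n \<Longrightarrow> (\<lambda>v. poly p (f v)) \<in> polyfun n"
proof (induction p)
  case 0 then show ?case using polyfun.const[of 0] by simp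
next
  case (pCons c p)
  have "(\<lambda>v. c + f v * poly p (f v)) \<in> polyfun n"
    by (intro polyfun.add polyfun.mult polyfun.const pCons)
  then show ?case by simp
qed

lemma pf_comp:
  assumes "g \<in> polyfun m" "length fs = m" "\<And>f. f \<in> set fs \<Longrightarrow> f \<in> polyfun n"
  shows "(\<lambda>q. g (map (\<lambda>f. f q) fs)) \<in> polyfun n"
  using assms(1)
proof induction
  case (proj i)
  then have "fs ! i \<in> polyfun n" using assms by auto
  then show ?case using proj assms(2) by simp
next
  case (const c) then show ?case by (rule polyfun.const)
next
  case (add f g) then show ?case using polyfun.add[OF add.IH] by simp
next
  case (mult f g) then show ?case using polyfun.mult[OF mult.IH] by simp
qed

lemma pf_rat:
  fixes Hh :: "'a::field list \<Rightarrow> 'a"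
  assumes "g \<in> polyfun m" "length fs = m" "\<And>f. f \<in> set fs \<Longrightarrow> f \<in> polyfun n"
    and Hh: "Hh \<in> polyfun n"
  shows "\<exists>N G. G \<in> polyfun n \<and> (\<forall>q. Hh q \<noteq> 0 \<longrightarrow> g (map (\<lambda>f. f q / Hh q) fs) = G q / Hh q ^ N)"
  using assms(1)
proof induction
  case (proj i)
  then have "fs ! i \<in> polyfun n" using assms by auto
  then show ?case using proj assms(2) by (intro exI[of _ 1] exI[of _ "fs ! i"]) auto
next
  case (const c) then show ?case by (intro exI[of _ 0] exI[of _ "\<lambda>q. c"]) (auto intro: polyfun.const)
next
  case (add f g)
  then obtain N1 G1 N2 G2 where 1: "G1 \<in> polyfun n" "\<forall>q. Hh q \<noteq> 0 \<longrightarrow> f (map (\<lambda>f. f q / Hh q) fs) = G1 q / Hh q ^ N1"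
    and 2: "G2 \<in> polyfun n" "\<forall>q. Hh q \<noteq> 0 \<longrightarrow> g (map (\<lambda>f. f q / Hh q) fs) = G2 q / Hh q ^ N2" by blast
  show ?case
  proof (intro exI[of _ "N1 + N2"] exI[of _ "\<lambda>q. G1 q * Hh q ^ N2 + G2 q * Hh q ^ N1"] conjI allI impI)
    show "(\<lambda>q. G1 q * Hh q ^ N2 + G2 q * Hh q ^ N1) \<in> polyfun n"
      by (intro polyfun.add polyfun.mult pf_power 1 2 Hh)
    fix q assume "Hh q \<noteq> 0"
    then show "f (map (\<lambda>f. f q / Hh q) fs) + g (map (\<lambda>f. f q / Hh q) fs) = (G1 q * Hh q ^ N2 + G2 q * Hh q ^ N1) / Hh q ^ (N1 + N2)"
      using 1 2 by (simp add: field_simps power_add)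
  qed
next
  case (mult f g)
  then obtain N1 G1 N2 G2 where 1: "G1 \<in> polyfun n" "\<forall>q. Hh q \<noteq> 0 \<longrightarrow> f (map (\<lambda>f. f q / Hh q) fs) = G1 q / Hh q ^ N1"
    and 2: "G2 \<in> polyfun n" "\<forall>q. Hh q \<noteq> 0 \<longrightarrow> g (map (\<lambda>f. f q / Hh q) fs) = G2 q / Hh q ^ N2" by blast
  show ?case
  proof (intro exI[of _ "N1 + N2"] exI[of _ "\<lambda>q. G1 q * G2 q"] conjI allI impI)
    show "(\<lambda>q. G1 q * G2 q) \<in> polyfun n"
      by (intro polyfun.mult 1 2)
    fix q assume "Hh q \<noteq> 0"
    then show "f (map (\<lambda>f. f q / Hh q) fs) * g (map (\<lambda>f. f q / Hh q) fs) = G1 q * G2 q / Hh q ^ (N1 + N2)"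
      using 1 2 by (simp add: power_add)
  qed
qed

lemmas pf_intros = polyfun.proj polyfun.const polyfun.add polyfun.mult pf_diff pf_uminus pf_power pf_sum' pf_poly

section \<open>Hensel lifting\<close>

lemma pow_diff_fac: "(p + h) ^ n - p ^ n = h * (\<Sum>i<n. p ^ (n - Suc i) * (p + h) ^ i)"
  for p h :: "'a::comm_ring_1"
  using power_diff_sumr2[of "p + h" n p] by simp

lemma poly_pow_diff_sum:
  fixes p h :: "'a::comm_ring_1 poly"
  assumes "poly p 0 = w" "poly h 0 = 0"
  shows "poly (\<Sum>i<n. p ^ (n - Suc i) * (p + h) ^ i) 0 = of_nat n * w ^ (n - 1)"
proof -
  have "poly (\<Sum>i<n. p ^ (n - Suc i) * (p + h) ^ i) 0 = (\<Sum>i<n. w ^ (n - 1))"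
  proof (subst poly_sum, intro sum.cong refl)
    fix i assume "i \<in> {..<n}"
    then show "poly (p ^ (n - Suc i) * (p + h) ^ i) 0 = w ^ (n - 1)"
      by (simp add: assms poly_power power_add[symmetric])
  qed
  then show ?thesis by simp
qed

lemma x_dvd_iff: "[:0, 1:] dvd p \<longleftrightarrow> poly p 0 = 0" for p :: "'a::comm_ring_1 poly"
  using dvd_iff_poly_eq_0[of 0 p] by simp

lemma hensel:
  fixes \<Phi> :: "'a::field poly \<Rightarrow> 'a poly"
  assumes step: "\<And>p h. poly p 0 = w \<Longrightarrow> poly h 0 = 0 \<Longrightarrow> \<exists>M. \<Phi> (p + h) - \<Phi> p = h * M \<and> poly M 0 = D"
    and D: "D \<noteq> 0" and base1: "poly (\<Phi> [:w:]) 0 = 1"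
  shows "m \<ge> 1 \<Longrightarrow> \<exists>p. poly p 0 = w \<and> degree p \<le> m - 1 \<and> monom 1 m dvd (1 - \<Phi> p)"
proof (induction m rule: dec_induct[where i=1, case_names base step])
  case base
  have "[:0,1:] dvd (1 - \<Phi> [:w:])" using base1 by (simp add: x_dvd_iff)
  moreover have "monom 1 1 = ([:0,1:] :: 'a poly)" by (simp add: monom_Suc)
  ultimately show ?case by (intro exI[of _ "[:w:]"]) auto
next
  case (step m)
  then obtain p where p: "poly p 0 = w" "degree p \<le> m - 1" "monom 1 m dvd (1 - \<Phi> p)" by blast
  then obtain R where R: "1 - \<Phi> p = monom 1 m * R" by (auto elim: dvdE)
  define c where "c = poly R 0 / D"
  have h0: "poly (monom c m) 0 = 0" using step(1) by (simp add: poly_monom)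
  obtain M where M: "\<Phi> (p + monom c m) - \<Phi> p = monom c m * M" "poly M 0 = D"
    using assms(1)[OF p(1) h0] by blast
  have "1 - \<Phi> (p + monom c m) = monom 1 m * (R - smult c M)"
  proof -
    have "1 - \<Phi> (p + monom c m) = (1 - \<Phi> p) - (\<Phi> (p + monom c m) - \<Phi> p)" by simp
    also have "\<dots> = monom 1 m * R - monom c m * M" using R M by simp
    also have "monom c m * M = monom 1 m * smult c M" by (metis mult.commute mult_smult_right smult_monom mult.right_neutral)
    finally show ?thesis by (simp add: algebra_simps)
  qed
  moreover have "poly (R - smult c M) 0 = 0" using M D by (simp add: c_def)
  then obtain K where "R - smult c M = [:0,1:] * K" using x_dvd_iff by (metis dvdE)
  moreover have "monom 1 m * [:0,1:] = (monom 1 (Suc m) :: 'a poly)"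
    by (simp add: monom_altdef)
  ultimately have "monom 1 (Suc m) dvd (1 - \<Phi> (p + monom c m))"
    by (metis dvd_triv_left mult.assoc)
  moreover have "degree (p + monom c m) \<le> Suc m - 1"
    using p(2) step(1) by (intro degree_add_le) (auto simp: degree_monom_le order.trans[OF degree_monom_le])
  moreover have "poly (p + monom c m) 0 = w" using p h0 by simp
  ultimately show ?case by blast
qed


lemma monom_dvd_cancel:
  fixes f M :: "'a::field poly"
  assumes "poly M 0 \<noteq> 0"
  shows "monom 1 m dvd f * M \<Longrightarrow> monom 1 m dvd f"
proof (induction m arbitrary: f)
  case 0 then show ?case by simp
next
  case (Suc m)
  have e: "monom 1 (Suc m) = monom 1 m * ([:0,1:] :: 'a poly)" by (simp add: monom_altdef)
  have "monom 1 m dvd f * M" using Suc.prems unfolding e by (rule dvd_mult_left)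
  then have "monom 1 m dvd f" by (rule Suc.IH)
  then obtain g where g: "f = monom 1 m * g" by (auto elim: dvdE)
  have "monom 1 m * [:0,1:] dvd monom 1 m * (g * M)" using Suc.prems unfolding e g by (simp add: mult.assoc)
  moreover have "monom 1 m \<noteq> (0 :: 'a poly)" by simp
  ultimately have "[:0,1:] dvd g * M" using dvd_mult_cancel_left[of "monom 1 m" "[:0,1:]" "g * M"] by blast
  then have "poly g 0 = 0" using assms by (simp add: x_dvd_iff)
  then have "[:0,1:] dvd g" by (simp add: x_dvd_iff)
  then show ?case unfolding g e by (rule mult_dvd_mono[OF dvd_refl])
qed

lemma hensel_unique:
  fixes \<Phi> :: "'a::field poly \<Rightarrow> 'a poly"
  assumes step: "\<And>p h. poly p 0 = w \<Longrightarrow> poly h 0 = 0 \<Longrightarrow> \<exists>M. \<Phi> (p + h) - \<Phi> p = h * M \<and> poly M 0 = D"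
    and D: "D \<noteq> 0"
    and p1: "poly p1 0 = w" "degree p1 \<le> m - 1" "monom 1 m dvd (1 - \<Phi> p1)"
    and p2: "poly p2 0 = w" "degree p2 \<le> m - 1" "monom 1 m dvd (1 - \<Phi> p2)"
    and m: "m \<ge> 1"
  shows "p1 = p2"
proof (rule ccontr)
  assume ne: "p1 \<noteq> p2"
  have h0: "poly (p2 - p1) 0 = 0" using p1 p2 by simp
  obtain M where M: "\<Phi> (p1 + (p2 - p1)) - \<Phi> p1 = (p2 - p1) * M" "poly M 0 = D"
    using step[OF p1(1) h0] by blast
  have "monom 1 m dvd (1 - \<Phi> p1) - (1 - \<Phi> p2)" using p1(3) p2(3) by (rule dvd_diff)
  then have "monom 1 m dvd (p2 - p1) * M" using M by simp
  then have d: "monom 1 m dvd (p2 - p1)" using monom_dvd_cancel M D by blast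
  have "p2 - p1 \<noteq> 0" using ne by simp
  then have "degree (monom (1::'a) m) \<le> degree (p2 - p1)" using d dvd_imp_degree_le by blast
  moreover have "degree (p2 - p1) \<le> m - 1" using p1 p2 by (meson degree_diff_le)
  ultimately show False using m by (simp add: degree_monom_eq)
qed

lemma poly_Fsub: "poly (Fsub d a p) x = (poly p x) ^ d + (\<Sum>i=1..d. a i * x ^ i * (poly p x) ^ (d - i))"
  by (simp add: Fsub_def poly_sum poly_monom poly_power mult.assoc)

lemma Fsub_step:
  fixes a :: "nat \<Rightarrow> 'a::field"
  assumes "poly p 0 = w" "poly h 0 = 0"
  shows "\<exists>M. Fsub d a (p + h) - Fsub d a p = h * M \<and> poly M 0 = of_nat d * w ^ (d - 1)"
proof -
  define DS where "DS n = (\<Sum>i<n. p ^ (n - Suc i) * (p + h) ^ i)" for n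
  define M where "M = DS d + (\<Sum>i=1..d. smult (a i) (monom 1 i * DS (d - i)))"
  have "Fsub d a (p + h) - Fsub d a p = ((p + h) ^ d - p ^ d)
      + (\<Sum>i=1..d. smult (a i) (monom 1 i * ((p + h) ^ (d - i) - p ^ (d - i))))"
    unfolding Fsub_def add_diff_add sum_subtractf[symmetric] by (simp only: smult_diff_right[symmetric] right_diff_distrib[symmetric])
  also have "\<dots> = h * DS d + (\<Sum>i=1..d. smult (a i) (monom 1 i * (h * DS (d - i))))"
    by (simp only: DS_def pow_diff_fac)
  also have "\<dots> = h * M"
    by (simp only: M_def distrib_left sum_distrib_left mult_smult_right mult.left_commute)
  finally have 1: "Fsub d a (p + h) - Fsub d a p = h * M" .
  have "poly M 0 = poly (DS d) 0"
    by (auto simp: M_def poly_sum poly_monom power_0_left intro!: sum.neutral)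
  also have "\<dots> = of_nat d * w ^ (d - 1)" unfolding DS_def using assms by (rule poly_pow_diff_sum)
  finally show ?thesis using 1 by blast
qed

lemma Fsub_base:
  assumes "w ^ d = 1"
  shows "poly (Fsub d a [:w:]) 0 = (1::'a::field)"
  using assms by (auto simp: poly_Fsub power_0_left intro!: sum.neutral)

lemma H_nonzero: "w \<in> H d \<Longrightarrow> d \<ge> 1 \<Longrightarrow> w \<noteq> 0"
  by (auto simp: H_def power_0_left)

lemma pw_spec:
  fixes a :: "nat \<Rightarrow> 'a::field_char_0"
  assumes w: "w \<in> H d" and d: "d \<ge> 1" and r: "r \<ge> 1"
  shows "degree (pw d a r w) \<le> r - 1 \<and> poly (pw d a r w) 0 = w \<and> monom 1 r dvd (1 - Fsub d a (pw d a r w))"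
proof -
  have wd: "w ^ d = 1" using w by (simp add: H_def)
  have w0: "w \<noteq> 0" using H_nonzero w d by blast
  have D: "of_nat d * w ^ (d - 1) \<noteq> (0::'a)" using w0 d by simp
  have st: "\<And>p h. poly p 0 = w \<Longrightarrow> poly h 0 = 0 \<Longrightarrow> \<exists>M. Fsub d a (p + h) - Fsub d a p = h * M \<and> poly M 0 = of_nat d * w ^ (d - 1)"
    by (rule Fsub_step)
  obtain p where p: "poly p 0 = w" "degree p \<le> r - 1" "monom 1 r dvd (1 - Fsub d a p)"
    using hensel[of w "Fsub d a" "of_nat d * w ^ (d - 1)" r, OF st D Fsub_base[OF wd] r] by blast
  have "\<exists>!p. degree p \<le> r - 1 \<and> poly p 0 = w \<and> monom 1 r dvd (1 - Fsub d a p)"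
  proof (rule ex1I[of _ p])
    show "degree p \<le> r - 1 \<and> poly p 0 = w \<and> monom 1 r dvd (1 - Fsub d a p)" using p by blast
    fix q assume "degree q \<le> r - 1 \<and> poly q 0 = w \<and> monom 1 r dvd (1 - Fsub d a q)"
    then show "q = p" using hensel_unique[OF st D _ _ _ p(1) p(2) p(3) r] by blast
  qed
  then show ?thesis unfolding pw_def by (rule theI')
qed

lemma root_series:
  assumes d: "d \<ge> (1::nat)" and s: "s \<ge> 1"
  shows "\<exists>S :: 'a::field_char_0 poly. poly S 0 = 1 \<and> monom 1 s dvd (1 - S ^ d * [:1, 1:])"
proof -
  have st: "\<And>p h :: 'a poly. poly p 0 = 1 \<Longrightarrow> poly h 0 = 0 \<Longrightarrow> \<exists>M. (p + h) ^ d * [:1,1:] - p ^ d * [:1,1:] = h * M \<and> poly M 0 = of_nat d"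
  proof -
    fix p h :: "'a poly" assume a: "poly p 0 = 1" "poly h 0 = 0"
    show "\<exists>M. (p + h) ^ d * [:1,1:] - p ^ d * [:1,1:] = h * M \<and> poly M 0 = of_nat d"
      apply (rule exI[of _ "(\<Sum>i<d. p ^ (d - Suc i) * (p + h) ^ i) * [:1,1:]"])
      using poly_pow_diff_sum[OF a, of d]
      by (simp only: left_diff_distrib[symmetric] pow_diff_fac mult.assoc poly_mult, simp)
  qed
  have D: "of_nat d \<noteq> (0::'a)" using d by simp
  have base: "poly ([:1:] ^ d * [:1,1:]) 0 = (1::'a)" by (simp add: poly_power)
  have "\<exists>p :: 'a poly. poly p 0 = 1 \<and> degree p \<le> s - 1 \<and> monom 1 s dvd (1 - p ^ d * [:1,1:])"
    apply (rule hensel[of 1 "\<lambda>p. p ^ d * [:1,1:]" "of_nat d" s])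
       apply (erule (1) st)
      apply (rule D)
     apply (simp add: poly_power)
    apply (rule s)
    done
  then show ?thesis by blast
qed


section \<open>The gluing relation\<close>

lemma glue_rel_mem:
  "(e1, e2) \<in> glue_rel d r s a a' \<longleftrightarrow>
    (\<exists>w l x c1 c2 c1' c2'. e1 = (w, [x, c1, c2]) \<and> e2 = (l, [x, c1', c2']) \<and> w \<in> H d \<and> l \<in> H d \<and>
      ((w = l \<and> c1' = c1 \<and> c2' = c2) \<or>
       (x \<noteq> 0 \<and> c1' = c1 + (poly (pw d a r w) x - poly (pw d a r l) x) / x ^ r
               \<and> c2' = c2 + (poly (pw d a' s w) x - poly (pw d a' s l) x) / x ^ s)))"
  unfolding glue_rel_def mem_Collect_eq prod.inject by (rule iffI; elim exE conjE; blast)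

lemma len3: "length v = 3 \<Longrightarrow> v = [v!0, v!1, v!2]"
  by (cases v; cases "tl v"; cases "tl (tl v)") (auto simp: numeral_3_eq_3)

lemma shift_sym: "c' = c + (A - B) / t \<Longrightarrow> c = c' + (B - A) / (t::'a::field)"
  by (simp add: diff_divide_distrib)

lemma shift_trans: "c' = c + (A - B) / t \<Longrightarrow> c'' = c' + (B - C) / t \<Longrightarrow> c'' = c + (A - C) / (t::'a::field)"
  by (simp add: diff_divide_distrib)

lemma shift_trans1: "c'' = c' + (B - C) / t \<Longrightarrow> c' = c \<Longrightarrow> c'' = c + (B - C) / (t::'a::field)"
  by simp

lemma glue_equiv:
  fixes a a' :: "nat \<Rightarrow> 'a::field"
  shows "equiv (H d \<times> {v. length v = 3}) (glue_rel d r s a a')"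
proof (rule equivI)
  show "glue_rel d r s a a' \<subseteq> (H d \<times> {v. length v = 3}) \<times> (H d \<times> {v. length v = 3})"
    by (auto simp: glue_rel_mem)
next
  show "refl_on (H d \<times> {v. length v = 3}) (glue_rel d r s a a')"
  proof (rule refl_onI)
    fix e :: "'a \<times> 'a list" assume "e \<in> H d \<times> {v. length v = 3}"
    then obtain w v where e: "e = (w, v)" "w \<in> H d" "length v = 3" by auto
    obtain x c1 c2 where v: "v = [x, c1, c2]" using len3[OF e(3)] by blast
    show "(e, e) \<in> glue_rel d r s a a'"
      unfolding glue_rel_mem e(1) v using e(2) by blast
  qed
next
  show "sym (glue_rel d r s a a')"
  proof (rule symI)
    fix e1 e2 assume "(e1, e2) \<in> glue_rel d r s a a'"
    then show "(e2, e1) \<in> glue_rel d r s a a'"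
      unfolding glue_rel_mem
    proof (elim exE conjE)
      fix w l x c1 c2 c1' c2'
      assume *: "e1 = (w, [x, c1, c2])" "e2 = (l, [x, c1', c2'])" "w \<in> H d" "l \<in> H d"
        "w = l \<and> c1' = c1 \<and> c2' = c2 \<or> x \<noteq> 0 \<and> c1' = c1 + (poly (pw d a r w) x - poly (pw d a r l) x) / x ^ r \<and>
        c2' = c2 + (poly (pw d a' s w) x - poly (pw d a' s l) x) / x ^ s"
      show "\<exists>w l x c1 c2 c1' c2'. e2 = (w, [x, c1, c2]) \<and> e1 = (l, [x, c1', c2']) \<and> w \<in> H d \<and> l \<in> H d \<and>
        (w = l \<and> c1' = c1 \<and> c2' = c2 \<or> x \<noteq> 0 \<and> c1' = c1 + (poly (pw d a r w) x - poly (pw d a r l) x) / x ^ r \<and>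
        c2' = c2 + (poly (pw d a' s w) x - poly (pw d a' s l) x) / x ^ s)"
        apply (rule exI[of _ l], rule exI[of _ w], rule exI[of _ x], rule exI[of _ c1'], rule exI[of _ c2'], rule exI[of _ c1], rule exI[of _ c2])
        using *(5)
        apply (elim disjE conjE)
        using *(1-4) apply simp
        apply (intro conjI disjI2)
        using *(1-4) by (simp_all add: add_divide_distrib[symmetric])
    qed
  qed
next
  show "trans (glue_rel d r s a a')"
  proof (rule transI)
    fix e1 e2 e3 assume "(e1, e2) \<in> glue_rel d r s a a'" "(e2, e3) \<in> glue_rel d r s a a'"
    then show "(e1, e3) \<in> glue_rel d r s a a'"
    proof -
      from \<open>(e1, e2) \<in> _\<close> obtain w l x c1 c2 c1' c2' where
        A: "e1 = (w, [x, c1, c2])" "e2 = (l, [x, c1', c2'])" "w \<in> H d" "l \<in> H d"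
        "w = l \<and> c1' = c1 \<and> c2' = c2 \<or> x \<noteq> 0 \<and> c1' = c1 + (poly (pw d a r w) x - poly (pw d a r l) x) / x ^ r \<and>
        c2' = c2 + (poly (pw d a' s w) x - poly (pw d a' s l) x) / x ^ s" unfolding glue_rel_mem by blast
      from \<open>(e2, e3) \<in> _\<close> obtain l2 m x2 b1 b2 b1' b2' where
        B: "e2 = (l2, [x2, b1, b2])" "e3 = (m, [x2, b1', b2'])" "l2 \<in> H d" "m \<in> H d"
        "l2 = m \<and> b1' = b1 \<and> b2' = b2 \<or> x2 \<noteq> 0 \<and> b1' = b1 + (poly (pw d a r l2) x2 - poly (pw d a r m) x2) / x2 ^ r \<and>
        b2' = b2 + (poly (pw d a' s l2) x2 - poly (pw d a' s m) x2) / x2 ^ s" unfolding glue_rel_mem by blast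
      from A(2) B(1) have eq: "l2 = l" "x2 = x" "b1 = c1'" "b2 = c2'" by auto
      show ?thesis unfolding glue_rel_mem
        apply (rule exI[of _ w], rule exI[of _ m], rule exI[of _ x], rule exI[of _ c1], rule exI[of _ c2], rule exI[of _ b1'], rule exI[of _ b2'])
        using A B unfolding eq
        apply (elim disjE conjE)
           apply simp
          apply (metis shift_trans1)
         apply simp
        apply (metis shift_trans)
        done
    qed
  qed
qed

lemma Wcls_eq: "((w, v), (l, v')) \<in> glue_rel d r s a a' \<Longrightarrow> Wcls d r s a a' w v = Wcls d r s a a' l v'"
  unfolding Wcls_def by (rule equiv_class_eq[OF glue_equiv])

lemma Wcls_self: "w \<in> H d \<Longrightarrow> length v = 3 \<Longrightarrow> (w, v) \<in> Wcls d r s a a' w v"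
  unfolding Wcls_def by (rule equiv_class_self[OF glue_equiv]) auto

lemma Wcls_in: "w \<in> H d \<Longrightarrow> length v = 3 \<Longrightarrow> Wcls d r s a a' w v \<in> Wpts d r s a a'"
  unfolding Wcls_def Wpts_def by (rule quotientI) auto

lemma Wpts_E: "C \<in> Wpts d r s a a' \<Longrightarrow> \<exists>w v. w \<in> H d \<and> length v = 3 \<and> C = Wcls d r s a a' w v"
  unfolding Wpts_def Wcls_def by (erule quotientE) auto

lemma Wcls_len: "e \<in> Wcls d r s a a' w v \<Longrightarrow> length (snd e) = 3"
  unfolding Wcls_def by (auto simp: glue_rel_mem)

definition sw :: "'a \<times> 'a list \<Rightarrow> 'a \<times> 'a list" where
  "sw e = (fst e, [snd e ! 0, snd e ! 2, snd e ! 1])"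

lemma sw_sw: "length (snd e) = 3 \<Longrightarrow> sw (sw e) = e"
  using len3[of "snd e"] by (cases e) (simp add: sw_def)

lemma sw_sw_img: "(\<And>e. e \<in> X \<Longrightarrow> length (snd e) = 3) \<Longrightarrow> sw ` sw ` X = X"
  by (simp add: image_image sw_sw cong: image_cong)

lemma Wcls_swap:
  fixes a a' :: "nat \<Rightarrow> 'a::field"
  shows "Wcls d s r a' a w [x, c2, c1] = sw ` Wcls d r s a a' w [x, c1, c2]"
proof (rule set_eqI)
  fix e :: "'a \<times> 'a list"
  obtain l v where e: "e = (l, v)" by (cases e)
  show "e \<in> Wcls d s r a' a w [x, c2, c1] \<longleftrightarrow> e \<in> sw ` Wcls d r s a a' w [x, c1, c2]"
  proof
    assume "e \<in> Wcls d s r a' a w [x, c2, c1]"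
    then have "((w, [x, c2, c1]), (l, v)) \<in> glue_rel d s r a' a" unfolding Wcls_def e by simp
    then obtain b1 b2 where v: "v = [x, b2, b1]" and
      c: "w \<in> H d" "l \<in> H d" "(w = l \<and> b2 = c2 \<and> b1 = c1) \<or> (x \<noteq> 0 \<and> b2 = c2 + (poly (pw d a' s w) x - poly (pw d a' s l) x) / x ^ s
               \<and> b1 = c1 + (poly (pw d a r w) x - poly (pw d a r l) x) / x ^ r)"
      unfolding glue_rel_mem by auto
    have "((w, [x, c1, c2]), (l, [x, b1, b2])) \<in> glue_rel d r s a a'"
      unfolding glue_rel_mem using c by blast
    then have "(l, [x, b1, b2]) \<in> Wcls d r s a a' w [x, c1, c2]" unfolding Wcls_def by simp
    moreover have "e = sw (l, [x, b1, b2])" unfolding e v sw_def by simp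
    ultimately show "e \<in> sw ` Wcls d r s a a' w [x, c1, c2]" by blast
  next
    assume "e \<in> sw ` Wcls d r s a a' w [x, c1, c2]"
    then obtain e' where e': "e' \<in> Wcls d r s a a' w [x, c1, c2]" "e = sw e'" by blast
    obtain l' v' where e'': "e' = (l', v')" by (cases e')
    have "((w, [x, c1, c2]), (l', v')) \<in> glue_rel d r s a a'" using e' e'' unfolding Wcls_def by simp
    then obtain b1 b2 where v: "v' = [x, b1, b2]" and
      c: "w \<in> H d" "l' \<in> H d" "(w = l' \<and> b1 = c1 \<and> b2 = c2) \<or> (x \<noteq> 0 \<and> b1 = c1 + (poly (pw d a r w) x - poly (pw d a r l') x) / x ^ r
               \<and> b2 = c2 + (poly (pw d a' s w) x - poly (pw d a' s l') x) / x ^ s)"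
      unfolding glue_rel_mem by auto
    have "((w, [x, c2, c1]), (l', [x, b2, b1])) \<in> glue_rel d s r a' a"
      unfolding glue_rel_mem using c by blast
    moreover have "e = (l', [x, b2, b1])" using e' e'' v by (simp add: sw_def)
    ultimately show "e \<in> Wcls d s r a' a w [x, c2, c1]" unfolding Wcls_def by simp
  qed
qed

lemma Wcls_swap': "length v = 3 \<Longrightarrow> sw ` Wcls d r s a a' w v = Wcls d s r a' a w [v!0, v!2, v!1]"
  for a a' :: "nat \<Rightarrow> 'a::field"
  using Wcls_swap[of d s r a' a w "v!0" "v!2" "v!1"] len3[of v] by simp

lemma sw_Wcls_in:
  fixes a a' :: "nat \<Rightarrow> 'a::field"
  assumes "C \<in> Wpts d r s a a'"
  shows "sw ` C \<in> Wpts d s r a' a"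
proof -
  obtain w v where "w \<in> H d" "length v = 3" "C = Wcls d r s a a' w v" using Wpts_E[OF assms] by blast
  then have "sw ` C = Wcls d s r a' a w [v!0, v!2, v!1]" using Wcls_swap' by simp
  then show ?thesis using Wcls_in[of w d "[v!0, v!2, v!1]"] \<open>w \<in> H d\<close> by simp
qed

lemma iso_swap:
  fixes a a' :: "nat \<Rightarrow> 'a::field"
  assumes "iso_W n S d s r a' a"
  shows "iso_W n S d r s a a'"
proof -
  obtain \<phi> \<psi> where hto: "mor_to_W n S d s r a' a \<phi>" and hfr: "mor_from_W n S d s r a' a \<psi>"
    and inv1: "\<forall>p\<in>S. \<psi> (\<phi> p) = p" and inv2: "\<forall>x\<in>Wpts d s r a' a. \<phi> (\<psi> x) = x"
    using assms unfolding iso_W_def by blast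
  define \<phi>2 where "\<phi>2 q = sw ` \<phi> q" for q
  define \<psi>2 where "\<psi>2 C = \<psi> (sw ` C)" for C
  have phiW: "\<phi> p \<in> Wpts d s r a' a" if "p \<in> S" for p
  proof -
    from hto that obtain w h g1 g2 g3 where "w \<in> H d" "h p \<noteq> 0"
      "\<forall>q\<in>S. h q \<noteq> 0 \<longrightarrow> \<phi> q = Wcls d s r a' a w [g1 q / h q, g2 q / h q, g3 q / h q]"
      unfolding mor_to_W_def by blast
    then have "\<phi> p = Wcls d s r a' a w [g1 p / h p, g2 p / h p, g3 p / h p]" using that by blast
    then show ?thesis using Wcls_in[of w d "[g1 p / h p, g2 p / h p, g3 p / h p]"] \<open>w \<in> H d\<close> by simp
  qed
  have ssw: "sw ` sw ` C = C" if hC: "C \<in> Wpts d' r' s' b b'" for C d' r' s' and b b' :: "nat \<Rightarrow> 'a"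
  proof -
    obtain w v where "C = Wcls d' r' s' b b' w v" using Wpts_E[OF hC] by blast
    then show ?thesis using Wcls_len[of _ d' r' s' b b' w v] by (intro sw_sw_img) blast
  qed
  have "mor_to_W n S d r s a a' \<phi>2"
    unfolding mor_to_W_def
  proof
    fix p assume "p \<in> S"
    from hto this obtain w h g1 g2 g3 where w: "w \<in> H d" and pf: "h \<in> polyfun n" "g1 \<in> polyfun n" "g2 \<in> polyfun n" "g3 \<in> polyfun n" "h p \<noteq> 0"
      and loc: "\<forall>q\<in>S. h q \<noteq> 0 \<longrightarrow> \<phi> q = Wcls d s r a' a w [g1 q / h q, g2 q / h q, g3 q / h q]"
      unfolding mor_to_W_def by blast
    have eq: "\<forall>q\<in>S. h q \<noteq> 0 \<longrightarrow> \<phi>2 q = Wcls d r s a a' w [g1 q / h q, g3 q / h q, g2 q / h q]"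
    proof (intro ballI impI)
      fix q assume "q \<in> S" "h q \<noteq> 0"
      then have "\<phi>2 q = sw ` Wcls d s r a' a w [g1 q / h q, g2 q / h q, g3 q / h q]"
        using loc unfolding \<phi>2_def by blast
      also have "\<dots> = sw ` sw ` Wcls d r s a a' w [g1 q / h q, g3 q / h q, g2 q / h q]"
        by (rule arg_cong[where f="image sw"], rule Wcls_swap)
      also have "\<dots> = Wcls d r s a a' w [g1 q / h q, g3 q / h q, g2 q / h q]"
        by (rule ssw[of _ d r s a a'], rule Wcls_in[OF w]) simp
      finally show "\<phi>2 q = Wcls d r s a a' w [g1 q / h q, g3 q / h q, g2 q / h q]" .
    qed
    then show "\<exists>w\<in>H d. \<exists>h g1 g2 g3. h \<in> polyfun n \<and> g1 \<in> polyfun n \<and> g2 \<in> polyfun n \<and> g3 \<in> polyfun n \<and> h p \<noteq> 0 \<and>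
        (\<forall>q\<in>S. h q \<noteq> 0 \<longrightarrow> \<phi>2 q = Wcls d r s a a' w [g1 q / h q, g2 q / h q, g3 q / h q])"
      using w pf by blast
  qed
  moreover have "mor_from_W n S d r s a a' \<psi>2"
    unfolding mor_from_W_def
  proof (intro conjI ballI subsetI)
    fix y assume "y \<in> \<psi>2 ` Wpts d r s a a'"
    then obtain C where C: "C \<in> Wpts d r s a a'" "y = \<psi> (sw ` C)" unfolding \<psi>2_def by blast
    have "\<psi> ` Wpts d s r a' a \<subseteq> S" using hfr unfolding mor_from_W_def by blast
    then show "y \<in> S" using sw_Wcls_in[OF C(1)] C(2) by blast
  next
    fix w :: 'a assume w: "w \<in> H d"
    from hfr w obtain gs where gs: "length gs = n" "\<forall>g\<in>set gs. g \<in> polyfun 3"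
      "\<forall>v. length v = 3 \<longrightarrow> \<psi> (Wcls d s r a' a w v) = map (\<lambda>g. g v) gs"
      unfolding mor_from_W_def by blast
    define fs :: "('a list \<Rightarrow> 'a) list" where "fs = [\<lambda>v. v!0, \<lambda>v. v!2, \<lambda>v. v!1]"
    have fsp: "\<And>f. f \<in> set fs \<Longrightarrow> f \<in> polyfun 3" unfolding fs_def by (auto intro: polyfun.proj)
    show "\<exists>gs. length gs = n \<and> (\<forall>g\<in>set gs. g \<in> polyfun 3) \<and>
        (\<forall>v. length v = 3 \<longrightarrow> \<psi>2 (Wcls d r s a a' w v) = map (\<lambda>g. g v) gs)"
    proof (intro exI[of _ "map (\<lambda>g v. g (map (\<lambda>f. f v) fs)) gs"] conjI allI impI ballI)
      show "length (map (\<lambda>g v. g (map (\<lambda>f. f v) fs)) gs) = n" using gs by simp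
    next
      fix g assume "g \<in> set (map (\<lambda>g v. g (map (\<lambda>f. f v) fs)) gs)"
      then obtain g0 where "g0 \<in> set gs" "g = (\<lambda>v. g0 (map (\<lambda>f. f v) fs))" by auto
      then show "g \<in> polyfun 3" using pf_comp[of g0 3 fs 3] fsp gs(2) by (simp add: fs_def)
    next
      fix v :: "'a list" assume v: "length v = 3"
      have "\<psi>2 (Wcls d r s a a' w v) = \<psi> (Wcls d s r a' a w [v!0, v!2, v!1])"
        unfolding \<psi>2_def using Wcls_swap'[OF v] by simp
      also have "\<dots> = map (\<lambda>g. g [v!0, v!2, v!1]) gs" using gs(3) by simp
      finally show "\<psi>2 (Wcls d r s a a' w v) = map (\<lambda>g. g v) (map (\<lambda>g v. g (map (\<lambda>f. f v) fs)) gs)"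
        by (simp add: fs_def)
    qed
  qed
  moreover have "\<forall>p\<in>S. \<psi>2 (\<phi>2 p) = p"
  proof
    fix p assume "p \<in> S"
    then have "sw ` sw ` \<phi> p = \<phi> p" by (intro ssw[of _ d s r a' a] phiW)
    then show "\<psi>2 (\<phi>2 p) = p" using inv1 \<open>p \<in> S\<close> by (simp add: \<phi>2_def \<psi>2_def)
  qed
  moreover have "\<forall>x\<in>Wpts d r s a a'. \<phi>2 (\<psi>2 x) = x"
  proof
    fix C assume C: "C \<in> Wpts d r s a a'"
    then have "\<phi> (\<psi> (sw ` C)) = sw ` C" using inv2 sw_Wcls_in[OF C] by blast
    then show "\<phi>2 (\<psi>2 C) = C" using ssw[OF C] by (simp add: \<phi>2_def \<psi>2_def)
  qed
  ultimately show ?thesis unfolding iso_W_def by (intro exI[of _ \<phi>2] exI[of _ \<psi>2]) simp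
qed


lemma poly_shift: "\<exists>q. \<forall>t. poly p (c + t) = poly p c + t * poly q t"
  for p :: "'a::comm_ring_1 poly"
proof -
  obtain b q where bq: "pcompose p [:c, 1:] = pCons b q" by (rule pCons_cases)
  have "\<And>t. poly p (c + t) = b + t * poly q t"
    using arg_cong[OF bq, of "\<lambda>f. poly f t" for t] by (simp add: poly_pcompose)
  moreover have "poly p c = b" using \<open>\<And>t. poly p (c + t) = b + t * poly q t\<close>[of 0] by simp
  ultimately show ?thesis by auto
qed

definition Dm :: "nat \<Rightarrow> ('a::comm_ring_1 list \<Rightarrow> 'a) set" where
  "Dm m = {f. \<exists>g\<in>polyfun 3. \<forall>v. f v = (v ! 0) ^ m * g v}"

lemma DmI: "g \<in> polyfun 3 \<Longrightarrow> (\<And>v. f v = (v ! 0) ^ m * g v) \<Longrightarrow> f \<in> Dm m"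
  unfolding Dm_def by blast

lemma DmE: "f \<in> Dm m \<Longrightarrow> (\<And>g. g \<in> polyfun 3 \<Longrightarrow> (\<And>v. f v = (v ! 0) ^ m * g v) \<Longrightarrow> P) \<Longrightarrow> P"
  unfolding Dm_def by blast

lemma Dm_pf: "f \<in> Dm m \<Longrightarrow> f \<in> polyfun 3"
proof (erule DmE)
  fix g assume g: "g \<in> polyfun 3" and fe: "\<And>v. f v = (v ! 0) ^ m * g v"
  have "(\<lambda>v. (v ! 0) ^ m * g v) \<in> polyfun 3"
    by (rule polyfun.mult[OF pf_power[OF polyfun.proj] g]) simp
  moreover have "f = (\<lambda>v. (v ! 0) ^ m * g v)" by (rule ext) (rule fe)
  ultimately show "f \<in> polyfun 3" by simp
qed

lemma Dm_add: "f \<in> Dm m \<Longrightarrow> g \<in> Dm m \<Longrightarrow> (\<lambda>v. f v + g v) \<in> Dm m"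
  apply (erule DmE, erule DmE)
  subgoal for f' g' by (rule DmI[of "\<lambda>v. f' v + g' v"]) (auto intro: polyfun.add simp: distrib_left)
  done

lemma Dm_mult: "h \<in> polyfun 3 \<Longrightarrow> g \<in> Dm m \<Longrightarrow> (\<lambda>v. h v * g v) \<in> Dm m"
  apply (erule DmE)
  subgoal for g' by (rule DmI[of "\<lambda>v. h v * g' v"]) (auto intro: polyfun.mult simp: mult.left_commute)
  done

lemma Dm_mult2: "h \<in> polyfun 3 \<Longrightarrow> g \<in> Dm m \<Longrightarrow> (\<lambda>v. g v * h v) \<in> Dm m"
  using Dm_mult[of h g m] by (simp add: mult.commute)

lemma Dm_uminus: "g \<in> Dm m \<Longrightarrow> (\<lambda>v. - g v) \<in> Dm m"
  using Dm_mult[OF polyfun.const[of "-1"], of g m] by simp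

lemma Dm_diff: "f \<in> Dm m \<Longrightarrow> g \<in> Dm m \<Longrightarrow> (\<lambda>v. f v - g v) \<in> Dm m"
  using Dm_add[OF _ Dm_uminus, of f m g] by simp

lemma Dm_sum: "(\<And>i. i \<in> I \<Longrightarrow> (\<lambda>v. f i v) \<in> Dm m) \<Longrightarrow> (\<lambda>v. \<Sum>i\<in>I. f i v) \<in> Dm m"
proof (cases "finite I")
  case True
  assume a: "\<And>i. i \<in> I \<Longrightarrow> (\<lambda>v. f i v) \<in> Dm m"
  from True a show ?thesis
  proof (induction I rule: finite_induct)
    case empty then show ?case by (simp add: DmI[OF polyfun.const[of 0]])
  next
    case (insert x F)
    then show ?case using Dm_add[of "\<lambda>v. f x v" m "\<lambda>v. \<Sum>i\<in>F. f i v"] by simp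
  qed
next
  case False then show ?thesis by (simp add: DmI[OF polyfun.const[of 0]])
qed

lemma Dm_unit:
  fixes f g h :: "'a::field list \<Rightarrow> 'a"
  assumes f: "f \<in> polyfun 3" and h: "h \<in> polyfun 3" and fg: "(\<lambda>v. f v * g v) \<in> Dm m"
    and g: "\<And>v. g v = c + v ! 0 * h v" and c: "c \<noteq> 0"
  shows "f \<in> Dm m"
proof -
  obtain F0 where F0: "F0 \<in> polyfun 3" "\<And>v. f v * g v = (v ! 0) ^ m * F0 v" by (rule DmE[OF fg]) blast
  define k where "k v = - h v / c" for v
  define G where "G v = (\<Sum>j<m. (v ! 0 * k v) ^ j) / c" for v
  have kp: "k \<in> polyfun 3" unfolding k_def
    using polyfun.mult[OF pf_uminus[OF h] polyfun.const[of "1/c"]] by (simp add: divide_inverse)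
  have Gp: "G \<in> polyfun 3" unfolding G_def
    using polyfun.mult[OF pf_sum'[of "{..<m}" "\<lambda>j v. (v ! 0 * k v) ^ j"] polyfun.const[of "1/c"]]
    by (simp add: divide_inverse pf_power polyfun.mult polyfun.proj kp)
  have gk: "g v = c * (1 - v ! 0 * k v)" for v using c by (simp add: g k_def field_simps)
  have gG: "g v * G v = 1 - (v ! 0 * k v) ^ m" for v
    using c by (simp add: gk G_def one_diff_power_eq)
  have p1: "f v = (v ! 0) ^ m * (F0 v * G v + f v * k v ^ m)" for v
  proof -
    have "f v = f v * (g v * G v) + f v * (v ! 0 * k v) ^ m" unfolding gG by (simp add: right_diff_distrib)
    also have "\<dots> = (f v * g v) * G v + f v * (v ! 0 * k v) ^ m" by (simp add: algebra_simps)
    also have "\<dots> = (v ! 0) ^ m * (F0 v * G v + f v * k v ^ m)" unfolding F0(2) by (simp add: algebra_simps power_mult_distrib)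
    finally show ?thesis .
  qed
  have p2: "(\<lambda>v. F0 v * G v + f v * k v ^ m) \<in> polyfun 3"
    by (intro polyfun.add polyfun.mult pf_power F0(1) Gp f kp)
  show ?thesis by (rule DmI[OF p2 p1])
qed


lemma H_finite: "d \<ge> 1 \<Longrightarrow> finite (H d :: 'a::field set)"
proof -
  assume d: "d \<ge> 1"
  have ne: "monom 1 d - 1 \<noteq> (0 :: 'a poly)"
  proof
    assume "monom 1 d - 1 = (0 :: 'a poly)"
    then have "coeff (monom 1 d - 1) d = (0::'a)" by simp
    then show False using d by (simp add: coeff_1)
  qed
  have e: "H d = {w. poly (monom 1 d - 1) w = 0}" by (auto simp: H_def poly_monom)
  show ?thesis unfolding e by (rule poly_roots_finite[OF ne])
qed

lemma one_in_H: "1 \<in> H d"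
  by (simp add: H_def)

locale wsetup =
  fixes d r s :: nat and a a' :: "nat \<Rightarrow> 'k::field_char_0"
  assumes d2: "d \<ge> 2" and r1: "r \<ge> 1" and s1: "s \<ge> 1"
begin

lemma d1: "d \<ge> 1" using d2 by simp

definition Fv :: "'k \<Rightarrow> 'k \<Rightarrow> 'k" where
  "Fv x y = y ^ d + (\<Sum>i=1..d. a i * x ^ i * y ^ (d - i))"

abbreviation pp :: "'k \<Rightarrow> 'k poly" where "pp w \<equiv> pw d a r w"
abbreviation qq :: "'k \<Rightarrow> 'k poly" where "qq w \<equiv> pw d a' s w"

definition beta :: "'k \<Rightarrow> 'k poly" where
  "beta w = (1 - Fsub d a (pp w)) div monom 1 r"

definition Dsum :: "nat \<Rightarrow> 'k \<Rightarrow> 'k \<Rightarrow> 'k" where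
  "Dsum n y p = (\<Sum>i<n. p ^ (n - Suc i) * y ^ i)"

definition Af :: "'k \<Rightarrow> 'k \<Rightarrow> 'k \<Rightarrow> 'k" where
  "Af w x y = - (Dsum d y (poly (pp w) x) + (\<Sum>i=1..d. a i * x ^ i * Dsum (d - i) y (poly (pp w) x)))"

lemma pp_spec: "w \<in> H d \<Longrightarrow> degree (pp w) \<le> r - 1 \<and> poly (pp w) 0 = w \<and> monom 1 r dvd (1 - Fsub d a (pp w))"
  using pw_spec d1 r1 by blast

lemma pp0: "w \<in> H d \<Longrightarrow> poly (pp w) 0 = w" using pp_spec by blast

lemma beta_eq: "w \<in> H d \<Longrightarrow> 1 - Fv x (poly (pp w) x) = x ^ r * poly (beta w) x"
proof -
  assume w: "w \<in> H d"
  then have dv: "monom 1 r dvd (1 - Fsub d a (pp w))" using pp_spec by blast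
  have "1 - Fsub d a (pp w) = monom 1 r * beta w"
    unfolding beta_def using dv by simp
  then have "poly (1 - Fsub d a (pp w)) x = poly (monom 1 r * beta w) x" by simp
  then show ?thesis by (simp add: poly_Fsub Fv_def poly_monom)
qed

lemma pow_diff_Dsum: "y ^ n - p ^ n = (y - p) * Dsum n y p"
  unfolding Dsum_def by (rule power_diff_sumr2)

lemma KI: "w \<in> H d \<Longrightarrow> 1 - Fv x y = (y - poly (pp w) x) * Af w x y + x ^ r * poly (beta w) x"
proof -
  assume w: "w \<in> H d"
  define P where "P = poly (pp w) x"
  have "Fv x y - Fv x P = (y ^ d - P ^ d) + (\<Sum>i=1..d. a i * x ^ i * (y ^ (d - i) - P ^ (d - i)))"
    unfolding Fv_def by (simp add: sum_subtractf[symmetric] right_diff_distrib)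
  also have "\<dots> = (y - P) * Dsum d y P + (\<Sum>i=1..d. a i * x ^ i * ((y - P) * Dsum (d - i) y P))"
    by (simp only: pow_diff_Dsum)
  also have "(\<Sum>i=1..d. a i * x ^ i * ((y - P) * Dsum (d - i) y P)) = (y - P) * (\<Sum>i=1..d. a i * x ^ i * Dsum (d - i) y P)"
    by (simp add: sum_distrib_left algebra_simps)
  also have "(y - P) * Dsum d y P + (y - P) * (\<Sum>i=1..d. a i * x ^ i * Dsum (d - i) y P) = - ((y - P) * Af w x y)"
    unfolding Af_def P_def[symmetric] by (simp add: algebra_simps)
  finally have c1: "Fv x y - Fv x P = - ((y - P) * Af w x y)" .
  have c2: "1 - Fv x P = x ^ r * poly (beta w) x" unfolding P_def by (rule beta_eq[OF w])
  have "1 - Fv x y = (1 - Fv x P) - (Fv x y - Fv x P)" by simp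
  also have "\<dots> = x ^ r * poly (beta w) x - (- ((y - P) * Af w x y))" by (simp only: c1 c2)
  also have "\<dots> = (y - P) * Af w x y + x ^ r * poly (beta w) x" by simp
  finally show ?thesis unfolding P_def .
qed

lemma Dsum_same: "Dsum n w w = of_nat n * w ^ (n - 1)"
proof -
  have "Dsum n w w = (\<Sum>i<n. w ^ (n - 1))"
    unfolding Dsum_def by (intro sum.cong refl) (simp add: power_add[symmetric])
  then show ?thesis by simp
qed

lemma Af0: "w \<in> H d \<Longrightarrow> Af w 0 w = - (of_nat d * w ^ (d - 1))"
  by (auto simp: Af_def pp0 Dsum_same power_0_left intro!: sum.neutral)

lemma Af0_nz: "w \<in> H d \<Longrightarrow> Af w 0 w \<noteq> 0"
  using Af0 H_nonzero[of w d] d1 by simp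

definition Yf :: "'k \<Rightarrow> 'k \<Rightarrow> 'k \<Rightarrow> 'k" where
  "Yf w x u = poly (pp w) x + x ^ r * u"

definition Zf :: "'k \<Rightarrow> 'k \<Rightarrow> 'k \<Rightarrow> 'k" where
  "Zf w x u = u * Af w x (Yf w x u) + poly (beta w) x"

lemma chart_eq: "w \<in> H d \<Longrightarrow> x ^ r * Zf w x u + Fv x (Yf w x u) = 1"
proof -
  assume w: "w \<in> H d"
  have "1 - Fv x (Yf w x u) = x ^ r * u * Af w x (Yf w x u) + x ^ r * poly (beta w) x"
    using KI[OF w, of x "Yf w x u"] by (simp add: Yf_def)
  then show ?thesis by (simp add: Zf_def algebra_simps)
qed

definition Ef :: "'k \<Rightarrow> 'k \<Rightarrow> 'k \<Rightarrow> 'k" where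
  "Ef x y z = - (x ^ (r - 1) * z + (\<Sum>i=1..d. a i * x ^ (i - 1) * y ^ (d - i)))"

lemma Ef_eq: "x ^ r * z + Fv x y = 1 \<Longrightarrow> y ^ d = 1 + x * Ef x y z"
proof -
  assume eq: "x ^ r * z + Fv x y = 1"
  have xr: "x ^ r = x * x ^ (r - 1)" using r1 by (metis One_nat_def Suc_pred not_one_le_zero power_Suc neq0_conv)
  have "x * (\<Sum>i=1..d. a i * x ^ (i - 1) * y ^ (d - i)) = (\<Sum>i=1..d. a i * x ^ i * y ^ (d - i))"
    unfolding sum_distrib_left
  proof (intro sum.cong refl)
    fix i assume "i \<in> {1..d}"
    then have "x ^ i = x * x ^ (i - 1)" by (metis One_nat_def Suc_pred atLeastAtMost_iff not_one_le_zero power_Suc neq0_conv)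
    then show "x * (a i * x ^ (i - 1) * y ^ (d - i)) = a i * x ^ i * y ^ (d - i)" by (simp add: algebra_simps)
  qed
  then have h1: "x * Ef x y z = - (x ^ r * z + (\<Sum>i=1..d. a i * x ^ i * y ^ (d - i)))"
    unfolding Ef_def xr by (simp add: algebra_simps)
  have h2: "y ^ d = 1 - (x ^ r * z + (\<Sum>i=1..d. a i * x ^ i * y ^ (d - i)))"
    using eq unfolding Fv_def by (metis add.commute add.left_commute eq_diff_eq)
  show ?thesis using h1 h2 by simp
qed

definition Sp :: "'k poly" where
  "Sp = (SOME S. poly S 0 = 1 \<and> monom 1 s dvd (1 - S ^ d * [:1, 1:]))"

lemma Sp_spec: "poly Sp 0 = 1 \<and> monom 1 s dvd (1 - Sp ^ d * [:1, 1:])"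
  unfolding Sp_def using root_series[OF d1 s1] by (rule someI_ex)

definition Om :: "'k \<Rightarrow> 'k \<Rightarrow> 'k \<Rightarrow> 'k" where
  "Om x y z = y * poly Sp (x * Ef x y z)"

definition Lg :: "'k \<Rightarrow> 'k poly" where
  "Lg l = smult (inverse (\<Prod>m\<in>H d - {l}. (l - m))) (\<Prod>m\<in>H d - {l}. [:- m, 1:])"

lemma Hfin: "finite (H d :: 'k set)" using H_finite d1 by blast

lemma Lg_val: "l \<in> H d \<Longrightarrow> m \<in> H d \<Longrightarrow> poly (Lg l) m = (if m = l then 1 else 0)"
proof -
  assume l: "l \<in> H d" and m: "m \<in> H d"
  have nz: "(\<Prod>m\<in>H d - {l}. (l - m)) \<noteq> 0" using Hfin by (simp add: prod_zero_iff)
  show ?thesis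
  proof (cases "m = l")
    case True then show ?thesis using nz by (simp add: Lg_def poly_prod)
  next
    case False
    then have "(\<Prod>m'\<in>H d - {l}. (m - m')) = 0" using Hfin m by (subst prod_zero_iff) auto
    then show ?thesis using False by (simp add: Lg_def poly_prod)
  qed
qed

definition Pf :: "'k \<Rightarrow> 'k \<Rightarrow> 'k \<Rightarrow> 'k" where
  "Pf x y z = (\<Sum>l\<in>H d. poly (qq l) x * poly (Lg l) (Om x y z))"

end


context wsetup
begin

lemma pf_Af: "f \<in> polyfun n \<Longrightarrow> g \<in> polyfun n \<Longrightarrow> (\<lambda>v. Af w (f v) (g v)) \<in> polyfun n"
  unfolding Af_def Dsum_def by (intro pf_intros) auto

lemma pf_Yf: "f \<in> polyfun n \<Longrightarrow> g \<in> polyfun n \<Longrightarrow> (\<lambda>v. Yf w (f v) (g v)) \<in> polyfun n"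
  unfolding Yf_def by (intro pf_intros) auto

lemma pf_Zf: "f \<in> polyfun n \<Longrightarrow> g \<in> polyfun n \<Longrightarrow> (\<lambda>v. Zf w (f v) (g v)) \<in> polyfun n"
  unfolding Zf_def by (intro pf_intros pf_Af pf_Yf) auto

lemma pf_Ef: "f \<in> polyfun n \<Longrightarrow> g \<in> polyfun n \<Longrightarrow> h \<in> polyfun n \<Longrightarrow> (\<lambda>v. Ef (f v) (g v) (h v)) \<in> polyfun n"
  unfolding Ef_def by (intro pf_intros) auto

lemma pf_Om: "f \<in> polyfun n \<Longrightarrow> g \<in> polyfun n \<Longrightarrow> h \<in> polyfun n \<Longrightarrow> (\<lambda>v. Om (f v) (g v) (h v)) \<in> polyfun n"
  unfolding Om_def by (intro pf_intros pf_Ef) auto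

lemma pf_Pf: "f \<in> polyfun n \<Longrightarrow> g \<in> polyfun n \<Longrightarrow> h \<in> polyfun n \<Longrightarrow> (\<lambda>v. Pf (f v) (g v) (h v)) \<in> polyfun n"
  unfolding Pf_def by (intro pf_intros pf_Om) auto

lemma key:
  assumes w: "w \<in> H d"
  shows "(\<lambda>v. poly (qq w) (v!0) - Pf (v!0) (Yf w (v!0) (v!1)) (Zf w (v!0) (v!1))) \<in> Dm s"
proof -
  define X :: "'k list \<Rightarrow> 'k" where "X v = v ! 0" for v
  define Yv where "Yv v = Yf w (X v) (v ! 1)" for v
  define Zv where "Zv v = Zf w (X v) (v ! 1)" for v
  define Ev where "Ev v = Ef (X v) (Yv v) (Zv v)" for v
  define Ov where "Ov v = Om (X v) (Yv v) (Zv v)" for v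
  have pX: "X \<in> polyfun 3" unfolding X_def by (rule polyfun.proj) simp
  have p1: "(\<lambda>v. v ! 1) \<in> polyfun 3" by (rule polyfun.proj) simp
  have pY: "Yv \<in> polyfun 3" unfolding Yv_def by (rule pf_Yf[OF pX p1])
  have pZ: "Zv \<in> polyfun 3" unfolding Zv_def by (rule pf_Zf[OF pX p1])
  have pE: "Ev \<in> polyfun 3" unfolding Ev_def by (rule pf_Ef[OF pX pY pZ])
  have pO: "Ov \<in> polyfun 3" unfolding Ov_def by (rule pf_Om[OF pX pY pZ])
  have wd: "w ^ d = 1" using w by (simp add: H_def)
  have Ydef: "Yv v ^ d = 1 + X v * Ev v" for v
    unfolding Ev_def Yv_def Zv_def by (rule Ef_eq[OF chart_eq[OF w]])
  obtain Q where Q: "1 - Sp ^ d * [:1,1:] = monom 1 s * Q" using Sp_spec by (auto elim: dvdE)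
  have Qe: "1 - (poly Sp e) ^ d * (1 + e) = e ^ s * poly Q e" for e
    using arg_cong[OF Q, of "\<lambda>p. poly p e"] by (simp add: poly_monom poly_power algebra_simps)
  have Oeq: "Ov v = Yv v * poly Sp (X v * Ev v)" for v by (simp add: Ov_def Om_def Ev_def)
  have Od: "Ov v ^ d - 1 = X v ^ s * (- (Ev v ^ s * poly Q (X v * Ev v)))" for v
  proof -
    have "Ov v ^ d - 1 = - (1 - poly Sp (X v * Ev v) ^ d * (1 + X v * Ev v))"
      unfolding Oeq power_mult_distrib Ydef by (simp add: algebra_simps)
    also have "\<dots> = - ((X v * Ev v) ^ s * poly Q (X v * Ev v))" by (simp only: Qe)
    finally show ?thesis by (simp add: power_mult_distrib)
  qed
  have OdDm: "(\<lambda>v. Ov v ^ d - 1) \<in> Dm s"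
  proof (rule DmI[of "\<lambda>v. - (Ev v ^ s * poly Q (X v * Ev v))"])
    show "(\<lambda>v. - (Ev v ^ s * poly Q (X v * Ev v))) \<in> polyfun 3"
      by (intro pf_intros pE pX)
    fix v show "Ov v ^ d - 1 = v ! 0 ^ s * - (Ev v ^ s * poly Q (X v * Ev v))"
      using Od[of v] by (simp add: X_def)
  qed
  obtain q1 where q1: "\<And>t. poly (pp w) (0 + t) = poly (pp w) 0 + t * poly q1 t" using poly_shift by blast
  obtain q2 where q2: "\<And>t. poly Sp (0 + t) = poly Sp 0 + t * poly q2 t" using poly_shift by blast
  define h1 where "h1 v = poly q1 (X v) + X v ^ (r - 1) * v ! 1" for v
  define h2 where "h2 v = Ev v * poly q2 (X v * Ev v)" for v
  define hO where "hO v = h1 v + w * h2 v + X v * h1 v * h2 v" for v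
  have xr: "t ^ r = t * t ^ (r - 1)" for t :: 'k
    using r1 by (metis One_nat_def Suc_pred not_one_le_zero power_Suc neq0_conv)
  have Y1: "Yv v = w + X v * h1 v" for v
    using q1[of "X v"] pp0[OF w] by (simp add: Yv_def Yf_def h1_def xr algebra_simps)
  have S1: "poly Sp (X v * Ev v) = 1 + X v * h2 v" for v
    using q2[of "X v * Ev v"] Sp_spec by (simp add: h2_def algebra_simps)
  have O1: "Ov v = w + X v * hO v" for v
    unfolding Oeq Y1 S1 hO_def by (simp add: algebra_simps)
  have phO: "hO \<in> polyfun 3" unfolding hO_def h1_def h2_def
    by (intro pf_intros pX pE) auto
  define Rp where "Rp = (\<Sum>i<d. monom (w ^ (d - Suc i)) i)"
  have Rp_val: "poly Rp y = Dsum d y w" for y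
    unfolding Rp_def Dsum_def by (simp add: poly_sum poly_monom)
  obtain q3 where q3: "\<And>t. poly Rp (w + t) = poly Rp w + t * poly q3 t" using poly_shift by blast
  have OwDm: "(\<lambda>v. Ov v - w) \<in> Dm s"
  proof (rule Dm_unit[where g="\<lambda>v. Dsum d (Ov v) w" and h="\<lambda>v. hO v * poly q3 (X v * hO v)" and c="of_nat d * w ^ (d - 1)"])
    show "(\<lambda>v. Ov v - w) \<in> polyfun 3" by (intro pf_intros pO)
    show "(\<lambda>v. hO v * poly q3 (X v * hO v)) \<in> polyfun 3" by (intro pf_intros phO pX)
    have "(\<lambda>v. (Ov v - w) * Dsum d (Ov v) w) = (\<lambda>v. Ov v ^ d - 1)"
      using pow_diff_Dsum[of _ d w] wd by (simp add: fun_eq_iff)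
    then show "(\<lambda>v. (Ov v - w) * Dsum d (Ov v) w) \<in> Dm s" using OdDm by simp
    fix v
    show "Dsum d (Ov v) w = of_nat d * w ^ (d - 1) + v ! 0 * (hO v * poly q3 (X v * hO v))"
      using q3[of "X v * hO v"] unfolding O1 Rp_val[symmetric] by (simp add: Rp_val Dsum_same X_def)
    show "of_nat d * w ^ (d - 1) \<noteq> (0::'k)" using H_nonzero[OF w] d1 by simp
  qed
  have LDm: "(\<lambda>v. poly (Lg l) (Ov v) - poly (Lg l) w) \<in> Dm s" for l
  proof -
    obtain ql where ql: "\<And>t. poly (Lg l) (w + t) = poly (Lg l) w + t * poly ql t" using poly_shift by blast
    have "(\<lambda>v. poly (Lg l) (Ov v) - poly (Lg l) w) = (\<lambda>v. (Ov v - w) * poly ql (Ov v - w))"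
    proof (rule ext)
      fix v
      have "poly (Lg l) (w + (Ov v - w)) = poly (Lg l) w + (Ov v - w) * poly ql (Ov v - w)" by (rule ql)
      then show "poly (Lg l) (Ov v) - poly (Lg l) w = (Ov v - w) * poly ql (Ov v - w)" by simp
    qed
    moreover have "(\<lambda>v. (Ov v - w) * poly ql (Ov v - w)) \<in> Dm s"
      by (rule Dm_mult2[OF _ OwDm]) (intro pf_intros pO)
    ultimately show ?thesis by simp
  qed
  have sumw: "(\<Sum>l\<in>H d. poly (qq l) x * poly (Lg l) w) = poly (qq w) x" for x
  proof -
    have "(\<Sum>l\<in>H d. poly (qq l) x * poly (Lg l) w) = (\<Sum>l\<in>H d. if l = w then poly (qq l) x else 0)"
      by (intro sum.cong refl) (auto simp: Lg_val w)
    also have "\<dots> = poly (qq w) x" using w Hfin by (simp add: sum.delta)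
    finally show ?thesis .
  qed
  have E: "poly (qq w) (v!0) - Pf (v!0) (Yf w (v!0) (v!1)) (Zf w (v!0) (v!1))
      = - (\<Sum>l\<in>H d. poly (qq l) (X v) * (poly (Lg l) (Ov v) - poly (Lg l) w))" for v
  proof -
    have "Pf (v!0) (Yf w (v!0) (v!1)) (Zf w (v!0) (v!1)) = (\<Sum>l\<in>H d. poly (qq l) (X v) * poly (Lg l) (Ov v))"
      by (simp add: Pf_def Ov_def X_def Yv_def Zv_def)
    moreover have "(\<Sum>l\<in>H d. poly (qq l) (X v) * (poly (Lg l) (Ov v) - poly (Lg l) w))
        = (\<Sum>l\<in>H d. poly (qq l) (X v) * poly (Lg l) (Ov v)) - (\<Sum>l\<in>H d. poly (qq l) (X v) * poly (Lg l) w)"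
      by (simp add: right_diff_distrib sum_subtractf)
    ultimately show ?thesis using sumw[of "X v"] by (simp add: X_def)
  qed
  have "(\<lambda>v. - (\<Sum>l\<in>H d. poly (qq l) (X v) * (poly (Lg l) (Ov v) - poly (Lg l) w))) \<in> Dm s"
    by (intro Dm_uminus Dm_sum Dm_mult LDm pf_intros pX)
  then show ?thesis by (subst E) 
qed

end


context wsetup
begin

definition Tc :: "'k \<Rightarrow> 'k list \<Rightarrow> 'k" where
  "Tc w = (SOME g. g \<in> polyfun 3 \<and> (\<forall>v. poly (qq w) (v!0) - Pf (v!0) (Yf w (v!0) (v!1)) (Zf w (v!0) (v!1)) = (v!0) ^ s * g v))"

lemma Tc_spec: "w \<in> H d \<Longrightarrow> Tc w \<in> polyfun 3 \<and> (\<forall>v. poly (qq w) (v!0) - Pf (v!0) (Yf w (v!0) (v!1)) (Zf w (v!0) (v!1)) = (v!0) ^ s * Tc w v)"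
proof -
  assume w: "w \<in> H d"
  obtain g where "g \<in> polyfun 3" "\<And>v. poly (qq w) (v!0) - Pf (v!0) (Yf w (v!0) (v!1)) (Zf w (v!0) (v!1)) = (v!0) ^ s * g v"
    using key[OF w] by (rule DmE) blast
  then have "\<exists>g. g \<in> polyfun 3 \<and> (\<forall>v. poly (qq w) (v!0) - Pf (v!0) (Yf w (v!0) (v!1)) (Zf w (v!0) (v!1)) = (v!0) ^ s * g v)"
    by blast
  then show ?thesis unfolding Tc_def by (rule someI_ex)
qed

definition Tx :: "'k \<Rightarrow> 'k \<Rightarrow> 'k \<Rightarrow> 'k" where
  "Tx w x u = Tc w [x, u, 0]"

lemma Tx_eq: "w \<in> H d \<Longrightarrow> x ^ s * Tx w x u = poly (qq w) x - Pf x (Yf w x u) (Zf w x u)"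
proof -
  assume w: "w \<in> H d"
  then have "\<forall>v. poly (qq w) (v!0) - Pf (v!0) (Yf w (v!0) (v!1)) (Zf w (v!0) (v!1)) = (v!0) ^ s * Tc w v"
    using Tc_spec by blast
  then have "poly (qq w) ([x,u,0]!0) - Pf ([x,u,0]!0) (Yf w ([x,u,0]!0) ([x,u,0]!1)) (Zf w ([x,u,0]!0) ([x,u,0]!1)) = ([x,u,0]!0) ^ s * Tc w [x,u,0]"
    by (rule spec)
  then show ?thesis unfolding Tx_def by simp
qed

lemma Tx_div: "w \<in> H d \<Longrightarrow> x \<noteq> 0 \<Longrightarrow> Tx w x u = (poly (qq w) x - Pf x (Yf w x u) (Zf w x u)) / x ^ s"
  using Tx_eq[of w x u] by (simp add: eq_divide_eq mult.commute)

lemma pf_Tx: "w \<in> H d \<Longrightarrow> f \<in> polyfun n \<Longrightarrow> g \<in> polyfun n \<Longrightarrow> (\<lambda>v. Tx w (f v) (g v)) \<in> polyfun n"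
proof -
  assume w: "w \<in> H d" and f: "f \<in> polyfun n" and g: "g \<in> polyfun n"
  have "(\<lambda>q. Tc w (map (\<lambda>f. f q) [f, g, \<lambda>v. 0])) \<in> polyfun n"
    by (rule pf_comp[of "Tc w" 3]) (use Tc_spec[OF w] f g polyfun.const[of 0 n] in auto)
  then show ?thesis by (simp add: Tx_def)
qed

abbreviation SS :: "'k list set" where "SS \<equiv> cyl (Xt d r a)"

lemma SS_mem: "q \<in> SS \<longleftrightarrow> (\<exists>x y z t. q = [x, y, z, t] \<and> x ^ r * z + Fv x y = 1)"
  unfolding cyl_def Xt_def Fv_def by auto

lemma SS_E: "q \<in> SS \<Longrightarrow> (\<And>x y z t. q = [x, y, z, t] \<Longrightarrow> x ^ r * z + Fv x y = 1 \<Longrightarrow> P) \<Longrightarrow> P"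
  using SS_mem by blast

lemma Fv0: "Fv 0 y = y ^ d"
  unfolding Fv_def using d1 by (auto simp: power_0_left intro!: sum.neutral)

lemma x0_H: "0 ^ r * z + Fv 0 y = 1 \<Longrightarrow> y \<in> H d"
  using r1 by (simp add: Fv0 H_def power_0_left)

lemma Yf_pt: "x \<noteq> 0 \<Longrightarrow> Yf w x ((y - poly (pp w) x) / x ^ r) = y"
  by (simp add: Yf_def)

lemma Zf_pt: "w \<in> H d \<Longrightarrow> x \<noteq> 0 \<Longrightarrow> x ^ r * z + Fv x y = 1 \<Longrightarrow> Zf w x ((y - poly (pp w) x) / x ^ r) = z"
proof -
  assume w: "w \<in> H d" and x: "x \<noteq> 0" and eq: "x ^ r * z + Fv x y = 1"
  have "x ^ r * Zf w x ((y - poly (pp w) x) / x ^ r) + Fv x y = 1"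
    using chart_eq[OF w, of x "(y - poly (pp w) x) / x ^ r"] Yf_pt[OF x] by simp
  then have "x ^ r * Zf w x ((y - poly (pp w) x) / x ^ r) = x ^ r * z" using eq by (metis add_right_cancel)
  then show ?thesis using x by simp
qed

lemma Tx_pt: "w \<in> H d \<Longrightarrow> x \<noteq> 0 \<Longrightarrow> x ^ r * z + Fv x y = 1 \<Longrightarrow>
    Tx w x ((y - poly (pp w) x) / x ^ r) = (poly (qq w) x - Pf x y z) / x ^ s"
  using Tx_div Yf_pt Zf_pt by simp

definition psiw :: "'k \<Rightarrow> 'k list \<Rightarrow> 'k list" where
  "psiw w v = [v!0, Yf w (v!0) (v!1), Zf w (v!0) (v!1), v!2 + Tx w (v!0) (v!1)]"

definition psi :: "('k \<times> 'k list) set \<Rightarrow> 'k list" where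
  "psi C = psiw (fst (SOME e. e \<in> C)) (snd (SOME e. e \<in> C))"

definition phi :: "'k list \<Rightarrow> ('k \<times> 'k list) set" where
  "phi q = (let x = q!0; y = q!1; z = q!2; t = q!3; w = (if x = 0 then y else 1);
     c1 = (if x = 0 then (z - poly (beta y) 0) / Af y 0 y else (y - poly (pp 1) x) / x ^ r)
     in Wcls d r s a a' w [x, c1, t - Tx w x c1])"

lemma psiw_in: "w \<in> H d \<Longrightarrow> psiw w v \<in> SS"
  unfolding SS_mem psiw_def using chart_eq by blast

lemma WD: "((w, v), (l, v')) \<in> glue_rel d r s a a' \<Longrightarrow> psiw w v = psiw l v'"
proof -
  assume "((w, v), (l, v')) \<in> glue_rel d r s a a'"
  then obtain x c1 c2 c1' c2' where v: "v = [x, c1, c2]" "v' = [x, c1', c2']" and wl: "w \<in> H d" "l \<in> H d"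
    and c: "(w = l \<and> c1' = c1 \<and> c2' = c2) \<or>
       (x \<noteq> 0 \<and> c1' = c1 + (poly (pp w) x - poly (pp l) x) / x ^ r
               \<and> c2' = c2 + (poly (qq w) x - poly (qq l) x) / x ^ s)"
    unfolding glue_rel_mem by blast
  from c show ?thesis
  proof
    assume "w = l \<and> c1' = c1 \<and> c2' = c2" then show ?thesis using v by simp
  next
    assume h: "x \<noteq> 0 \<and> c1' = c1 + (poly (pp w) x - poly (pp l) x) / x ^ r
               \<and> c2' = c2 + (poly (qq w) x - poly (qq l) x) / x ^ s"
    then have x: "x \<noteq> 0" by blast
    have Y: "Yf l x c1' = Yf w x c1" using h by (simp add: Yf_def distrib_left)
    have "x ^ r * Zf l x c1' = x ^ r * Zf w x c1"
      using chart_eq[OF wl(2), of x c1'] chart_eq[OF wl(1), of x c1] Y by (metis add_right_cancel)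
    then have Z: "Zf l x c1' = Zf w x c1" using x by simp
    have "c2' + Tx l x c1' = c2 + (poly (qq w) x - poly (qq l) x) / x ^ s
        + (poly (qq l) x - Pf x (Yf w x c1) (Zf w x c1)) / x ^ s"
      using h Tx_div[OF wl(2) x, of c1'] Y Z by simp
    also have "\<dots> = c2 + (poly (qq w) x - Pf x (Yf w x c1) (Zf w x c1)) / x ^ s"
      by (simp add: diff_divide_distrib)
    also have "\<dots> = c2 + Tx w x c1" using Tx_div[OF wl(1) x, of c1] by simp
    finally show ?thesis using v Y Z by (simp add: psiw_def)
  qed
qed

lemma psi_Wcls: "w \<in> H d \<Longrightarrow> length v = 3 \<Longrightarrow> psi (Wcls d r s a a' w v) = psiw w v"
proof -
  assume w: "w \<in> H d" and v: "length v = 3"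
  have ex: "\<exists>e. e \<in> Wcls d r s a a' w v" using Wcls_self[OF w v] by blast
  define e where "e = (SOME e. e \<in> Wcls d r s a a' w v)"
  have "e \<in> Wcls d r s a a' w v" unfolding e_def using ex by (rule someI_ex)
  then have "((w, v), (fst e, snd e)) \<in> glue_rel d r s a a'" by (simp add: Wcls_def)
  then have "psiw w v = psiw (fst e) (snd e)" by (rule WD)
  then show ?thesis by (simp add: psi_def e_def)
qed

lemma K:
  assumes w: "w \<in> H d" and x: "x \<noteq> 0" and eq: "x ^ r * z + Fv x y = 1"
  shows "phi [x, y, z, t] = Wcls d r s a a' w [x, (y - poly (pp w) x) / x ^ r, t - Tx w x ((y - poly (pp w) x) / x ^ r)]"
proof -
  have one: "(1::'k) \<in> H d" by (rule one_in_H)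
  have "phi [x, y, z, t] = Wcls d r s a a' 1 [x, (y - poly (pp 1) x) / x ^ r, t - Tx 1 x ((y - poly (pp 1) x) / x ^ r)]"
    using x by (simp add: phi_def Let_def)
  also have "\<dots> = Wcls d r s a a' w [x, (y - poly (pp w) x) / x ^ r, t - Tx w x ((y - poly (pp w) x) / x ^ r)]"
  proof (rule Wcls_eq)
    have e1: "(y - poly (pp w) x) / x ^ r = (y - poly (pp 1) x) / x ^ r + (poly (pp 1) x - poly (pp w) x) / x ^ r"
      by (simp add: diff_divide_distrib)
    have e2: "t - Tx w x ((y - poly (pp w) x) / x ^ r) = t - Tx 1 x ((y - poly (pp 1) x) / x ^ r) + (poly (qq 1) x - poly (qq w) x) / x ^ s"
      unfolding Tx_pt[OF w x eq] Tx_pt[OF one x eq] by (simp add: diff_divide_distrib)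
    show "((1, [x, (y - poly (pp 1) x) / x ^ r, t - Tx 1 x ((y - poly (pp 1) x) / x ^ r)]),
        (w, [x, (y - poly (pp w) x) / x ^ r, t - Tx w x ((y - poly (pp w) x) / x ^ r)])) \<in> glue_rel d r s a a'"
      unfolding glue_rel_mem using one w x e1 e2 by blast
  qed
  finally show ?thesis .
qed

lemma phi_x0: "phi [0, y, z, t] = Wcls d r s a a' y [0, (z - poly (beta y) 0) / Af y 0 y, t - Tx y 0 ((z - poly (beta y) 0) / Af y 0 y)]"
  by (simp add: phi_def Let_def)

end


context wsetup
begin

lemma Yf0: "w \<in> H d \<Longrightarrow> Yf w 0 u = w"
  using r1 by (simp add: Yf_def pp0 power_0_left)

lemma Zf0: "w \<in> H d \<Longrightarrow> Zf w 0 u = u * Af w 0 w + poly (beta w) 0"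
  by (simp add: Zf_def Yf0)

lemma I1: "q \<in> SS \<Longrightarrow> psi (phi q) = q"
proof (erule SS_E)
  fix x y z t assume q: "q = [x, y, z, t]" and eq: "x ^ r * z + Fv x y = 1"
  show "psi (phi q) = q"
  proof (cases "x = 0")
    case True
    then have y: "y \<in> H d" using eq x0_H by simp
    define c where "c = (z - poly (beta y) 0) / Af y 0 y"
    have "phi q = Wcls d r s a a' y [0, c, t - Tx y 0 c]" unfolding q True c_def by (rule phi_x0)
    then have "psi (phi q) = psiw y [0, c, t - Tx y 0 c]" using psi_Wcls[OF y] by simp
    also have "\<dots> = [0, y, z, t]"
      using Af0_nz[OF y] by (simp add: psiw_def Yf0[OF y] Zf0[OF y] c_def)
    finally show ?thesis using q True by simp
  next
    case False
    have one: "(1::'k) \<in> H d" by (rule one_in_H)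
    define c where "c = (y - poly (pp 1) x) / x ^ r"
    have "phi q = Wcls d r s a a' 1 [x, c, t - Tx 1 x c]" unfolding q c_def by (rule K[OF one False eq])
    then have "psi (phi q) = psiw 1 [x, c, t - Tx 1 x c]" using psi_Wcls[OF one] by simp
    also have "\<dots> = [x, y, z, t]"
      by (simp add: psiw_def c_def Yf_pt[OF False] Zf_pt[OF one False eq])
    finally show ?thesis using q by simp
  qed
qed

lemma I2: "C \<in> Wpts d r s a a' \<Longrightarrow> phi (psi C) = C"
proof -
  assume "C \<in> Wpts d r s a a'"
  then obtain w v where w: "w \<in> H d" and lv: "length v = 3" and C: "C = Wcls d r s a a' w v"
    using Wpts_E by blast
  obtain x u c where v: "v = [x, u, c]" using len3[OF lv] by blast
  have pC: "psi C = [x, Yf w x u, Zf w x u, c + Tx w x u]"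
    using psi_Wcls[OF w lv] unfolding C v by (simp add: psiw_def)
  have eq: "x ^ r * Zf w x u + Fv x (Yf w x u) = 1" by (rule chart_eq[OF w])
  show ?thesis
  proof (cases "x = 0")
    case True
    have "phi (psi C) = phi [0, w, Zf w 0 u, c + Tx w 0 u]" using pC True Yf0[OF w] by simp
    also have "\<dots> = Wcls d r s a a' w [0, u, c]"
      using Af0_nz[OF w] by (simp add: phi_x0 Zf0[OF w])
    finally show ?thesis using C v True by simp
  next
    case False
    have uu: "(Yf w x u - poly (pp w) x) / x ^ r = u" using False by (simp add: Yf_def)
    have "phi (psi C) = Wcls d r s a a' w [x, (Yf w x u - poly (pp w) x) / x ^ r,
        (c + Tx w x u) - Tx w x ((Yf w x u - poly (pp w) x) / x ^ r)]"
      unfolding pC by (rule K[OF w False eq])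
    also have "\<dots> = C" unfolding uu C v by simp
    finally show ?thesis .
  qed
qed

lemma mor_from: "mor_from_W 4 SS d r s a a' psi"
  unfolding mor_from_W_def
proof (intro conjI ballI subsetI)
  fix y assume "y \<in> psi ` Wpts d r s a a'"
  then obtain C where "C \<in> Wpts d r s a a'" "y = psi C" by blast
  then obtain w v where "w \<in> H d" "length v = 3" "y = psi (Wcls d r s a a' w v)" using Wpts_E by blast
  then show "y \<in> SS" using psi_Wcls psiw_in by simp
next
  fix w :: 'k assume w: "w \<in> H d"
  have p0: "(\<lambda>v. v ! 0) \<in> polyfun 3" and p1: "(\<lambda>v. v ! 1) \<in> polyfun 3" and p2: "(\<lambda>v. v ! 2) \<in> polyfun 3"
    by (auto intro: polyfun.proj)
  show "\<exists>gs. length gs = 4 \<and> (\<forall>g\<in>set gs. g \<in> polyfun 3) \<and>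
      (\<forall>v. length v = 3 \<longrightarrow> psi (Wcls d r s a a' w v) = map (\<lambda>g. g v) gs)"
  proof (intro exI[of _ "[\<lambda>v. v!0, \<lambda>v. Yf w (v!0) (v!1), \<lambda>v. Zf w (v!0) (v!1), \<lambda>v. v!2 + Tx w (v!0) (v!1)]"] conjI allI impI ballI)
    fix g assume "g \<in> set [\<lambda>v. v!0, \<lambda>v. Yf w (v!0) (v!1), \<lambda>v. Zf w (v!0) (v!1), \<lambda>v. v!2 + Tx w (v!0) (v!1)]"
    then show "g \<in> polyfun 3"
      using p0 pf_Yf[OF p0 p1, of w] pf_Zf[OF p0 p1, of w] polyfun.add[OF p2 pf_Tx[OF w p0 p1]] by auto
  next
    fix v :: "'k list" assume "length v = 3"
    then show "psi (Wcls d r s a a' w v) = map (\<lambda>g. g v) [\<lambda>v. v!0, \<lambda>v. Yf w (v!0) (v!1), \<lambda>v. Zf w (v!0) (v!1), \<lambda>v. v!2 + Tx w (v!0) (v!1)]"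
      using psi_Wcls[OF w] by (simp add: psiw_def)
  qed simp
qed

end


context wsetup
begin

lemma loc_to:
  assumes w: "w \<in> H d" and Hp: "Hh \<in> polyfun 4" and Gp: "G1 \<in> polyfun 4" and hp: "Hh p \<noteq> 0"
    and loc: "\<forall>q\<in>SS. Hh q \<noteq> 0 \<longrightarrow> phi q = Wcls d r s a a' w [q!0, G1 q / Hh q, q!3 - Tx w (q!0) (G1 q / Hh q)]"
  shows "\<exists>w\<in>H d. \<exists>h g1 g2 g3. h \<in> polyfun 4 \<and> g1 \<in> polyfun 4 \<and> g2 \<in> polyfun 4 \<and> g3 \<in> polyfun 4 \<and> h p \<noteq> 0 \<and>
        (\<forall>q\<in>SS. h q \<noteq> 0 \<longrightarrow> phi q = Wcls d r s a a' w [g1 q / h q, g2 q / h q, g3 q / h q])"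
proof -
  have p0: "(\<lambda>v. v ! 0) \<in> polyfun 3" and p1: "(\<lambda>v. v ! 1) \<in> polyfun 3" and p2: "(\<lambda>v. v ! 2) \<in> polyfun 3"
    by (auto intro: polyfun.proj)
  have gp: "(\<lambda>v. v ! 2 - Tx w (v ! 0) (v ! 1)) \<in> polyfun 3"
    by (rule pf_diff[OF p2 pf_Tx[OF w p0 p1]])
  have q0: "(\<lambda>q. q ! 0) \<in> polyfun 4" and q3: "(\<lambda>q. q ! 3) \<in> polyfun 4" by (auto intro: polyfun.proj)
  define fs :: "('k list \<Rightarrow> 'k) list" where "fs = [\<lambda>q. q ! 0 * Hh q, G1, \<lambda>q. q ! 3 * Hh q]"
  have fsp: "\<And>f. f \<in> set fs \<Longrightarrow> f \<in> polyfun 4"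
    unfolding fs_def using polyfun.mult[OF q0 Hp] polyfun.mult[OF q3 Hp] Gp by auto
  have lfs: "length fs = 3" by (simp add: fs_def)
  obtain N G where G: "G \<in> polyfun 4"
    and GN: "\<forall>q. Hh q \<noteq> 0 \<longrightarrow> (\<lambda>v. v ! 2 - Tx w (v ! 0) (v ! 1)) (map (\<lambda>f. f q / Hh q) fs) = G q / Hh q ^ N"
    using pf_rat[OF gp lfs fsp Hp] by blast
  have GN': "q ! 3 - Tx w (q ! 0) (G1 q / Hh q) = G q / Hh q ^ N" if "Hh q \<noteq> 0" for q
    using GN that by (simp add: fs_def)
  have h1: "(\<lambda>q. Hh q ^ Suc N) \<in> polyfun 4" by (rule pf_power[OF Hp])
  have h2: "(\<lambda>q. q ! 0 * Hh q ^ Suc N) \<in> polyfun 4" by (rule polyfun.mult[OF q0 pf_power[OF Hp]])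
  have h3: "(\<lambda>q. G1 q * Hh q ^ N) \<in> polyfun 4" by (rule polyfun.mult[OF Gp pf_power[OF Hp]])
  have h4: "(\<lambda>q. G q * Hh q) \<in> polyfun 4" by (rule polyfun.mult[OF G Hp])
  have h5: "(\<lambda>q. Hh q ^ Suc N) p \<noteq> 0" using hp by simp
  have B: "\<forall>q\<in>SS. (\<lambda>q. Hh q ^ Suc N) q \<noteq> 0 \<longrightarrow> phi q = Wcls d r s a a' w
      [(\<lambda>q. q ! 0 * Hh q ^ Suc N) q / (\<lambda>q. Hh q ^ Suc N) q, (\<lambda>q. G1 q * Hh q ^ N) q / (\<lambda>q. Hh q ^ Suc N) q,
       (\<lambda>q. G q * Hh q) q / (\<lambda>q. Hh q ^ Suc N) q]"
  proof (intro ballI impI)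
    fix q assume qS: "q \<in> SS" and hq: "(\<lambda>q. Hh q ^ Suc N) q \<noteq> 0"
    then have hq': "Hh q \<noteq> 0" by simp
    have l: "[q ! 0 * Hh q ^ Suc N / Hh q ^ Suc N, G1 q * Hh q ^ N / Hh q ^ Suc N, G q * Hh q / Hh q ^ Suc N]
        = [q!0, G1 q / Hh q, q!3 - Tx w (q!0) (G1 q / Hh q)]"
      using hq' by (simp add: GN'[OF hq'] field_simps)
    show "phi q = Wcls d r s a a' w
      [(\<lambda>q. q ! 0 * Hh q ^ Suc N) q / (\<lambda>q. Hh q ^ Suc N) q, (\<lambda>q. G1 q * Hh q ^ N) q / (\<lambda>q. Hh q ^ Suc N) q,
       (\<lambda>q. G q * Hh q) q / (\<lambda>q. Hh q ^ Suc N) q]"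
      unfolding l using loc qS hq' by simp
  qed
  show ?thesis
    apply (rule bexI[OF _ w])
    apply (rule exI[of _ "\<lambda>q. Hh q ^ Suc N"])
    apply (rule exI[of _ "\<lambda>q. q ! 0 * Hh q ^ Suc N"])
    apply (rule exI[of _ "\<lambda>q. G1 q * Hh q ^ N"])
    apply (rule exI[of _ "\<lambda>q. G q * Hh q"])
    using h1 h2 h3 h4 h5 B by (intro conjI)
qed

lemma mor_to: "mor_to_W 4 SS d r s a a' phi"
  unfolding mor_to_W_def
proof
  fix p assume "p \<in> SS"
  then obtain x y z t where p: "p = [x, y, z, t]" and eqp: "x ^ r * z + Fv x y = 1" using SS_E by blast
  have q0: "(\<lambda>q. q ! 0) \<in> polyfun 4" and q1: "(\<lambda>q. q ! 1) \<in> polyfun 4" and q2: "(\<lambda>q. q ! 2) \<in> polyfun 4"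
    by (auto intro: polyfun.proj)
  show "\<exists>w\<in>H d. \<exists>h g1 g2 g3. h \<in> polyfun 4 \<and> g1 \<in> polyfun 4 \<and> g2 \<in> polyfun 4 \<and> g3 \<in> polyfun 4 \<and> h p \<noteq> 0 \<and>
        (\<forall>q\<in>SS. h q \<noteq> 0 \<longrightarrow> phi q = Wcls d r s a a' w [g1 q / h q, g2 q / h q, g3 q / h q])"
  proof (cases "x = 0")
    case False
    have one: "(1::'k) \<in> H d" by (rule one_in_H)
    show ?thesis
    proof (rule loc_to[OF one pf_power[OF q0, of r] pf_diff[OF q1 pf_poly[OF q0, of "pp 1"]]])
      show "p ! 0 ^ r \<noteq> 0" using p False by simp
      show "\<forall>q\<in>SS. q ! 0 ^ r \<noteq> 0 \<longrightarrow> phi q = Wcls d r s a a' 1 [q ! 0, (q ! 1 - poly (pp 1) (q ! 0)) / q ! 0 ^ r,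
          q ! 3 - Tx 1 (q ! 0) ((q ! 1 - poly (pp 1) (q ! 0)) / q ! 0 ^ r)]"
      proof (intro ballI impI)
        fix q assume "q \<in> SS" "q ! 0 ^ r \<noteq> 0"
        then obtain x' y' z' t' where q: "q = [x', y', z', t']" "x' ^ r * z' + Fv x' y' = 1" "x' \<noteq> 0"
          using SS_E by (metis nth_Cons_0 zero_power r1 not_one_le_zero neq0_conv)
        show "phi q = Wcls d r s a a' 1 [q ! 0, (q ! 1 - poly (pp 1) (q ! 0)) / q ! 0 ^ r,
          q ! 3 - Tx 1 (q ! 0) ((q ! 1 - poly (pp 1) (q ! 0)) / q ! 0 ^ r)]"
          using K[OF one q(3) q(2), of t'] q(1) by simp
      qed
    qed
  next
    case True
    then have y: "y \<in> H d" using eqp x0_H by simp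
    show ?thesis
    proof (rule loc_to[OF y pf_Af[OF q0 q1, of y] pf_diff[OF q2 pf_poly[OF q0, of "beta y"]]])
      show "Af y (p ! 0) (p ! 1) \<noteq> 0" using p True Af0_nz[OF y] by simp
      show "\<forall>q\<in>SS. Af y (q ! 0) (q ! 1) \<noteq> 0 \<longrightarrow> phi q = Wcls d r s a a' y [q ! 0, (q ! 2 - poly (beta y) (q ! 0)) / Af y (q ! 0) (q ! 1),
          q ! 3 - Tx y (q ! 0) ((q ! 2 - poly (beta y) (q ! 0)) / Af y (q ! 0) (q ! 1))]"
      proof (intro ballI impI)
        fix q assume qS: "q \<in> SS" and hq: "Af y (q ! 0) (q ! 1) \<noteq> 0"
        from qS obtain x' y' z' t' where q: "q = [x', y', z', t']" and eq: "x' ^ r * z' + Fv x' y' = 1"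
          using SS_E by blast
        have ki: "1 - Fv x' y' = (y' - poly (pp y) x') * Af y x' y' + x' ^ r * poly (beta y) x'"
          by (rule KI[OF y])
        show "phi q = Wcls d r s a a' y [q ! 0, (q ! 2 - poly (beta y) (q ! 0)) / Af y (q ! 0) (q ! 1),
          q ! 3 - Tx y (q ! 0) ((q ! 2 - poly (beta y) (q ! 0)) / Af y (q ! 0) (q ! 1))]"
        proof (cases "x' = 0")
          case True
          have "Fv 0 y' = 1" using eq True r1 by (simp add: power_0_left)
          then have "(y' - y) * Af y 0 y' = 0" using ki True r1 by (simp add: pp0[OF y] power_0_left)
          then have "y' = y" using hq q True by simp
          then show ?thesis using q True by (simp add: phi_x0)
        next
          case False
          have "x' ^ r * z' = 1 - Fv x' y'" using eq by (simp only: eq_diff_eq)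
          also note ki
          finally have "x' ^ r * z' = (y' - poly (pp y) x') * Af y x' y' + x' ^ r * poly (beta y) x'" .
          then have "x' ^ r * (z' - poly (beta y) x') = (y' - poly (pp y) x') * Af y x' y'"
            by (simp add: algebra_simps)
          then have c: "(y' - poly (pp y) x') / x' ^ r = (z' - poly (beta y) x') / Af y x' y'"
            using False hq q by (simp add: frac_eq_eq mult.commute)
          show ?thesis using K[OF y False eq, of t'] q unfolding c by simp
        qed
      qed
    qed
  qed
qed

theorem iso1: "iso_W 4 SS d r s a a'"
  unfolding iso_W_def using mor_to mor_from I1 I2 by blast

end

theorem theorem1p4p23:
  fixes a a' :: "nat \<Rightarrow> 'k::field_char_0" and d r s :: nat
  assumes alg_closed: "\<And>q :: 'k poly. degree q \<ge> 1 \<Longrightarrow> \<exists>x. poly q x = 0"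
    and "d \<ge> 2" and "r \<ge> 1" and "s \<ge> 1"
  shows "iso_W 4 (cyl (Xt d r a)) d r s a a' \<and> iso_W 4 (cyl (Xt d s a')) d r s a a'"
proof
  interpret A: wsetup d r s a a' using assms by unfold_locales
  show "iso_W 4 (cyl (Xt d r a)) d r s a a'" by (rule A.iso1)
next
  interpret B: wsetup d s r a' a using assms by unfold_locales
  show "iso_W 4 (cyl (Xt d s a')) d r s a a'" by (rule iso_swap[OF B.iso1])
qed

end
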